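(* Consider the uplink of a cell-free massive MIMO system with $M$ access points (APs), each with $L$ antennas, and $K$ user equipments (UEs), each with $N$ antennas. For $m=1,\dots,M$ and $l=1,\dots,K$, let $\mathbf{H}_{ml}\in\mathbb{C}^{L\times N}$ be the random channel between AP $m$ and UE $l$, and for each $k$ let $\mathbf{V}_{mk}\in\mathbb{C}^{L\times N}$ be a random combining matrix used by AP $m$ for UE $k$ (all entries having finite second moments, so all expectations below exist). Let $\mathbf{F}_{l,\mathrm{u}}\in\mathbb{C}^{N\times N}$ be deterministic precoding matrices and $\bar{\mathbf{F}}_{l,\mathrm{u}}=\mathbf{F}_{l,\mathrm{u}}\mathbf{F}_{l,\mathrm{u}}^{H}$. Define $$\mathbf{G}_{kl}=\begin{bmatrix}\mathbf{V}_{1k}^{H}\mathbf{H}_{1l}\\ \vdots\\ \mathbf{V}_{Mk}^{H}\mathbf{H}_{Ml}\end{bmatrix}\in\mathbb{C}^{MN\times N},\qquad \mathbf{S}_k=\mathrm{diag}\big(\mathbb{E}\{\mathbf{V}_{1k}^{H}\mathbf{V}_{1k}\},\dots,\mathbb{E}\{\mathbf{V}_{Mk}^{H}\mathbf{V}_{Mk}\}\big)\in\mathbb{C}^{MN\times MN}$$ (block diagonal), let $\sigma^2>0$, and let $\tau_p<\tau_c$ be positive integers. For a LSFD coefficient matrix $\mathbf{A}_k\in\mathbb{C}^{MN\times N}$ set $$\mathbf{D}_k=\mathbf{A}_k^{H}\mathbb{E}\{\mathbf{G}_{kk}\}\mathbf{F}_{k,\mathrm{u}},\qquad \boldsymbol{\Sigma}_k=\sum_{l=1}^{K}\mathbf{A}_k^{H}\mathbb{E}\{\mathbf{G}_{kl}\bar{\mathbf{F}}_{l,\mathrm{u}}\mathbf{G}_{kl}^{H}\}\mathbf{A}_k-\mathbf{D}_k\mathbf{D}_k^{H}+\sigma^2\mathbf{A}_k^{H}\mathbf{S}_k\mathbf{A}_k,$$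 and $$\mathrm{SE}_k(\mathbf{A}_k)=\Big(1-\frac{\tau_p}{\tau_c}\Big)\log_2\big|\mathbf{I}_N+\mathbf{D}_k^{H}\boldsymbol{\Sigma}_k^{-1}\mathbf{D}_k\big|.$$ Then $\mathrm{SE}_k(\mathbf{A}_k)$ is maximized over $\mathbf{A}_k$ by $$\mathbf{A}_k^{\mathrm{opt}}=\Big(\sum_{l=1}^{K}\mathbb{E}\{\mathbf{G}_{kl}\bar{\mathbf{F}}_{l,\mathrm{u}}\mathbf{G}_{kl}^{H}\}+\sigma^2\mathbf{S}_k\Big)^{-1}\mathbb{E}\{\mathbf{G}_{kk}\}\mathbf{F}_{k,\mathrm{u}},$$ and the maximum value equals $$\mathrm{SE}_k^{\mathrm{opt}}=\Big(1-\frac{\tau_p}{\tau_c}\Big)\log_2\Big|\mathbf{I}_N+\mathbf{F}_{k,\mathrm{u}}^{H}\mathbb{E}\{\mathbf{G}_{kk}\}^{H}\Big(\sum_{l=1}^{K}\mathbb{E}\{\mathbf{G}_{kl}\bar{\mathbf{F}}_{l,\mathrm{u}}\mathbf{G}_{kl}^{H}\}-\mathbb{E}\{\mathbf{G}_{kk}\}\bar{\mathbf{F}}_{k,\mathrm{u}}\mathbb{E}\{\mathbf{G}_{kk}\}^{H}+\sigma^2\mathbf{S}_k\Big)^{-1}\mathbb{E}\{\mathbf{G}_{kk}\}\mathbf{F}_{k,\mathrm{u}}\Big|.$$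
   Context: $|\cdot|$ denotes the determinant, $(\cdot)^H$ the conjugate transpose, and $\mathbb{E}\{\cdot\}$ expectation over the random channels and combining matrices. $\mathbf{A}_k$ ranges over matrices for which $\boldsymbol{\Sigma}_k$ is invertible; the matrices $\sum_{l}\mathbb{E}\{\mathbf{G}_{kl}\bar{\mathbf{F}}_{l,\mathrm{u}}\mathbf{G}_{kl}^{H}\}+\sigma^2\mathbf{S}_k$ and $\sum_{l}\mathbb{E}\{\mathbf{G}_{kl}\bar{\mathbf{F}}_{l,\mathrm{u}}\mathbf{G}_{kl}^{H}\}-\mathbb{E}\{\mathbf{G}_{kk}\}\bar{\mathbf{F}}_{k,\mathrm{u}}\mathbb{E}\{\mathbf{G}_{kk}\}^{H}+\sigma^2\mathbf{S}_k$ are (as implicit in the formulas) assumed invertible. *)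

theory Defs
  imports "HOL-Probability.Probability" "Jordan_Normal_Form.Schur_Decomposition"
    "Jordan_Normal_Form.Gauss_Jordan_Elimination"
begin

text \<open>Conventions: APs are indexed by m < M, UEs by l, k < K (0-based).
  Random matrices are functions from the sample space of a probability space P
  into complex matrices; expectation of a random matrix is entrywise.\<close>

definition mexp :: "'w measure \<Rightarrow> nat \<Rightarrow> nat \<Rightarrow> ('w \<Rightarrow> complex mat) \<Rightarrow> complex mat" where
  "mexp P nr nc X = mat nr nc (\<lambda>(i,j). LINT \<omega>|P. X \<omega> $$ (i,j))"

definition msum :: "nat \<Rightarrow> nat \<Rightarrow> ('i \<Rightarrow> complex mat) \<Rightarrow> 'i set \<Rightarrow> complex mat" where
  "msum nr nc f I = mat nr nc (\<lambda>ij. \<Sum>l\<in>I. f l $$ ij)"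

definition minv :: "complex mat \<Rightarrow> complex mat" where
  "minv A = the (mat_inverse A)"

definition Fbar :: "(nat \<Rightarrow> complex mat) \<Rightarrow> nat \<Rightarrow> complex mat" where
  "Fbar F l = F l * mat_adjoint (F l)"

text \<open>G_kl = [V_1k^H H_1l; ...; V_Mk^H H_Ml], an (M N) x N matrix.\<close>
definition Gmat :: "nat \<Rightarrow> nat \<Rightarrow> (nat \<Rightarrow> nat \<Rightarrow> 'w \<Rightarrow> complex mat) \<Rightarrow> (nat \<Rightarrow> nat \<Rightarrow> 'w \<Rightarrow> complex mat)
    \<Rightarrow> nat \<Rightarrow> nat \<Rightarrow> 'w \<Rightarrow> complex mat" where
  "Gmat M N V H k l \<omega> = mat (M*N) N
     (\<lambda>(i,j). (mat_adjoint (V (i div N) k \<omega>) * H (i div N) l \<omega>) $$ (i mod N, j))"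

text \<open>S_k = blockdiag(E{V_1k^H V_1k}, ..., E{V_Mk^H V_Mk}).\<close>
definition Smat :: "'w measure \<Rightarrow> nat \<Rightarrow> nat \<Rightarrow> (nat \<Rightarrow> nat \<Rightarrow> 'w \<Rightarrow> complex mat) \<Rightarrow> nat \<Rightarrow> complex mat" where
  "Smat P M N V k = mat (M*N) (M*N)
     (\<lambda>(i,j). if i div N = j div N
              then mexp P N N (\<lambda>\<omega>. mat_adjoint (V (i div N) k \<omega>) * V (i div N) k \<omega>) $$ (i mod N, j mod N)
              else 0)"

definition EGFG :: "'w measure \<Rightarrow> nat \<Rightarrow> nat \<Rightarrow> (nat \<Rightarrow> nat \<Rightarrow> 'w \<Rightarrow> complex mat)
    \<Rightarrow> (nat \<Rightarrow> nat \<Rightarrow> 'w \<Rightarrow> complex mat) \<Rightarrow> (nat \<Rightarrow> complex mat) \<Rightarrow> nat \<Rightarrow> nat \<Rightarrow> complex mat" where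
  "EGFG P M N V H F k l = mexp P (M*N) (M*N)
     (\<lambda>\<omega>. Gmat M N V H k l \<omega> * Fbar F l * mat_adjoint (Gmat M N V H k l \<omega>))"

definition EG :: "'w measure \<Rightarrow> nat \<Rightarrow> nat \<Rightarrow> (nat \<Rightarrow> nat \<Rightarrow> 'w \<Rightarrow> complex mat)
    \<Rightarrow> (nat \<Rightarrow> nat \<Rightarrow> 'w \<Rightarrow> complex mat) \<Rightarrow> nat \<Rightarrow> complex mat" where
  "EG P M N V H k = mexp P (M*N) N (Gmat M N V H k k)"

definition Dmat :: "'w measure \<Rightarrow> nat \<Rightarrow> nat \<Rightarrow> (nat \<Rightarrow> nat \<Rightarrow> 'w \<Rightarrow> complex mat)
    \<Rightarrow> (nat \<Rightarrow> nat \<Rightarrow> 'w \<Rightarrow> complex mat) \<Rightarrow> (nat \<Rightarrow> complex mat) \<Rightarrow> nat \<Rightarrow> complex mat \<Rightarrow> complex mat" where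
  "Dmat P M N V H F k A = mat_adjoint A * EG P M N V H k * F k"

definition Sigma :: "'w measure \<Rightarrow> nat \<Rightarrow> nat \<Rightarrow> nat \<Rightarrow> (nat \<Rightarrow> nat \<Rightarrow> 'w \<Rightarrow> complex mat)
    \<Rightarrow> (nat \<Rightarrow> nat \<Rightarrow> 'w \<Rightarrow> complex mat) \<Rightarrow> (nat \<Rightarrow> complex mat) \<Rightarrow> real \<Rightarrow> nat \<Rightarrow> complex mat \<Rightarrow> complex mat" where
  "Sigma P M N K V H F \<sigma>2 k A =
     msum N N (\<lambda>l. mat_adjoint A * EGFG P M N V H F k l * A) {0..<K}
     - Dmat P M N V H F k A * mat_adjoint (Dmat P M N V H F k A)
     + complex_of_real \<sigma>2 \<cdot>\<^sub>m (mat_adjoint A * Smat P M N V k * A)"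

text \<open>SE_k(A) = (1 - tau_p/tau_c) log2 det(I_N + D^H Sigma^{-1} D).  The determinant
  is real (and >= 1) whenever Sigma is invertible; we take its real part.\<close>
definition SE :: "'w measure \<Rightarrow> nat \<Rightarrow> nat \<Rightarrow> nat \<Rightarrow> (nat \<Rightarrow> nat \<Rightarrow> 'w \<Rightarrow> complex mat)
    \<Rightarrow> (nat \<Rightarrow> nat \<Rightarrow> 'w \<Rightarrow> complex mat) \<Rightarrow> (nat \<Rightarrow> complex mat) \<Rightarrow> real \<Rightarrow> nat \<Rightarrow> nat
    \<Rightarrow> nat \<Rightarrow> complex mat \<Rightarrow> real" where
  "SE P M N K V H F \<sigma>2 \<tau>p \<tau>c k A =
     (1 - real \<tau>p / real \<tau>c) *
     log 2 (Re (det (1\<^sub>m N + mat_adjoint (Dmat P M N V H F k A)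
                     * minv (Sigma P M N K V H F \<sigma>2 k A) * Dmat P M N V H F k A)))"

end

theory Submission
  imports Defs
begin

lemma adj_eq: "mat_adjoint (A :: complex mat) = mat (dim_col A) (dim_row A) (\<lambda>(i,j). cnj (A $$ (j,i)))"
  unfolding mat_adjoint_def by (rule eq_matI) (auto simp: mat_of_rows_def)

lemma adj_dim[simp]: "dim_row (mat_adjoint (A :: complex mat)) = dim_col A"
  "dim_col (mat_adjoint (A :: complex mat)) = dim_row A"
  by (simp_all add: adj_eq)

lemma adj_index[simp]: "i < dim_col A \<Longrightarrow> j < dim_row A \<Longrightarrow> mat_adjoint (A :: complex mat) $$ (i,j) = cnj (A $$ (j,i))"
  by (simp add: adj_eq)

lemma adj_carrier: "(mat_adjoint (A :: complex mat) \<in> carrier_mat n m) = (A \<in> carrier_mat m n)"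
  unfolding carrier_mat_def by (simp add: conj_comms)

lemma adj_carrier': "A \<in> carrier_mat m n \<Longrightarrow> mat_adjoint (A :: complex mat) \<in> carrier_mat n m"
  using adj_carrier by blast

lemma adj_adj[simp]: "mat_adjoint (mat_adjoint (A :: complex mat)) = A"
  by (rule eq_matI) auto

lemma adj_mult: fixes A B :: "complex mat"
  assumes "A \<in> carrier_mat n m" "B \<in> carrier_mat m p"
  shows "mat_adjoint (A * B) = mat_adjoint B * mat_adjoint A"
proof (rule eq_matI)
  fix i j assume "i < dim_row (mat_adjoint B * mat_adjoint A)" "j < dim_col (mat_adjoint B * mat_adjoint A)"
  then have i: "i < p" and j: "j < n" using assms by auto
  show "mat_adjoint (A * B) $$ (i, j) = (mat_adjoint B * mat_adjoint A) $$ (i, j)"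
    using i j assms by (simp add: scalar_prod_def sum_conjugate mult.commute)
qed (use assms in auto)

lemma adj_add: fixes A B :: "complex mat"
  assumes "A \<in> carrier_mat n m" "B \<in> carrier_mat n m"
  shows "mat_adjoint (A + B) = mat_adjoint A + mat_adjoint B"
  using assms by (intro eq_matI) auto

lemma adj_minus: fixes A B :: "complex mat"
  assumes "A \<in> carrier_mat n m" "B \<in> carrier_mat n m"
  shows "mat_adjoint (A - B) = mat_adjoint A - mat_adjoint B"
  using assms by (intro eq_matI) auto

lemma adj_smult: fixes A :: "complex mat"
  shows "mat_adjoint (c \<cdot>\<^sub>m A) = cnj c \<cdot>\<^sub>m mat_adjoint A"
  by (intro eq_matI) auto

lemma adj_one[simp]: "mat_adjoint (1\<^sub>m n :: complex mat) = 1\<^sub>m n"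
  by (intro eq_matI) auto

declare minus_carrier_mat[simp]

lemma massoc: fixes A B C :: "'a :: semiring_0 mat"
  shows "dim_col A = dim_row B \<Longrightarrow> dim_col B = dim_row C \<Longrightarrow> A * B * C = A * (B * C)"
  by (rule assoc_mult_mat[of A "dim_row A" "dim_col A" B "dim_col B" C "dim_col C"]) auto

definition qf :: "complex mat \<Rightarrow> complex vec \<Rightarrow> complex" where
  "qf M v = conjugate v \<bullet> (M *\<^sub>v v)"

definition psd :: "complex mat \<Rightarrow> bool" where
  "psd M = (\<forall>v \<in> carrier_vec (dim_row M). 0 \<le> qf M v)"

lemma sesq_adj: fixes A :: "complex mat"
  assumes A: "A \<in> carrier_mat n m" and v: "v \<in> carrier_vec n" and w: "w \<in> carrier_vec m"
  shows "conjugate v \<bullet> (A *\<^sub>v w) = conjugate (mat_adjoint A *\<^sub>v v) \<bullet> w"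
proof -
  have "conjugate v \<bullet> (A *\<^sub>v w) = (\<Sum>i<n. cnj (v $ i) * (\<Sum>j<m. A $$ (i,j) * w $ j))"
    using A v w by (simp add: scalar_prod_def lessThan_atLeast0)
  also have "\<dots> = (\<Sum>i<n. \<Sum>j<m. cnj (v $ i) * A $$ (i,j) * w $ j)"
    by (simp add: sum_distrib_left mult.assoc)
  also have "\<dots> = (\<Sum>j<m. \<Sum>i<n. cnj (v $ i) * A $$ (i,j) * w $ j)"
    by (rule sum.swap)
  also have "\<dots> = (\<Sum>j<m. cnj (\<Sum>i<n. cnj (A $$ (i,j)) * v $ i) * w $ j)"
    by (simp add: sum_distrib_right sum_distrib_left mult.commute mult.left_commute)
  also have "\<dots> = conjugate (mat_adjoint A *\<^sub>v v) \<bullet> w"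
    using A v w by (simp add: scalar_prod_def lessThan_atLeast0)
  finally show ?thesis .
qed

lemma qf_congr: fixes C T :: "complex mat"
  assumes C: "C \<in> carrier_mat n n" and T: "T \<in> carrier_mat n m" and u: "u \<in> carrier_vec m"
  shows "qf (mat_adjoint T * C * T) u = qf C (T *\<^sub>v u)"
proof -
  have TH: "mat_adjoint T \<in> carrier_mat m n" using T by (rule adj_carrier')
  have "(mat_adjoint T * C * T) *\<^sub>v u = mat_adjoint T *\<^sub>v (C *\<^sub>v (T *\<^sub>v u))"
  proof -
    have THC: "mat_adjoint T * C \<in> carrier_mat m n" using TH C by simp
    have "(mat_adjoint T * C * T) *\<^sub>v u = (mat_adjoint T * C) *\<^sub>v (T *\<^sub>v u)"
      by (rule assoc_mult_mat_vec[OF THC T u])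
    also have "\<dots> = mat_adjoint T *\<^sub>v (C *\<^sub>v (T *\<^sub>v u))"
      by (rule assoc_mult_mat_vec[OF TH C]) (use T u in simp)
    finally show ?thesis .
  qed
  moreover have "conjugate u \<bullet> (mat_adjoint T *\<^sub>v (C *\<^sub>v (T *\<^sub>v u))) = conjugate (T *\<^sub>v u) \<bullet> (C *\<^sub>v (T *\<^sub>v u))"
    using sesq_adj[OF TH u, of "C *\<^sub>v (T *\<^sub>v u)"] C T u by simp
  ultimately show ?thesis unfolding qf_def by simp
qed

lemma psd_congr: fixes C T :: "complex mat"
  assumes C: "C \<in> carrier_mat n n" and T: "T \<in> carrier_mat n m" and p: "psd C"
  shows "psd (mat_adjoint T * C * T)"
  unfolding psd_def
proof
  fix u :: "complex vec" assume "u \<in> carrier_vec (dim_row (mat_adjoint T * C * T))"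
  then have u: "u \<in> carrier_vec m" using T by simp
  show "0 \<le> qf (mat_adjoint T * C * T) u" unfolding qf_congr[OF C T u]
    using p C T u unfolding psd_def by simp
qed

lemma prod_list_ge_one: "(\<forall>x\<in>set xs. (1::complex) \<le> x) \<Longrightarrow> 1 \<le> prod_list xs"
proof (induct xs)
  case (Cons x xs)
  then have x: "1 \<le> x" and r: "1 \<le> prod_list xs" by auto
  have "(1::complex) * 1 \<le> x * prod_list xs"
  proof (rule mult_mono[OF x r])
    show "0 \<le> x" using x by (auto simp: less_eq_complex_def)
  qed (auto simp: less_eq_complex_def)
  then show ?case by simp
qed simp

lemma det_ge_one: fixes M :: "complex mat"
  assumes M: "M \<in> carrier_mat n n"
    and ev: "\<And>a v. v \<in> carrier_vec n \<Longrightarrow> v \<noteq> 0\<^sub>v n \<Longrightarrow> M *\<^sub>v v = a \<cdot>\<^sub>v v \<Longrightarrow> 0 \<le> a"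
  shows "1 \<le> det (1\<^sub>m n + M)"
proof -
  have mM: "-M \<in> carrier_mat n n" using M by simp
  obtain as where cp: "char_poly (-M) = (\<Prod>a\<leftarrow>as. [:-a,1:])" using char_poly_factorized[OF mM] by blast
  have "poly (char_poly (-M)) 1 = det (- char_matrix (-M) 1)" by (rule char_poly_matrix[OF mM])
  also have "- char_matrix (-M) 1 = 1\<^sub>m n + M"
    using M by (intro eq_matI) (auto simp: char_matrix_def)
  finally have d: "det (1\<^sub>m n + M) = poly (char_poly (-M)) 1" by simp
  have each: "1 \<le> 1 - a" if a: "a \<in> set as" for a
  proof -
    have "poly (char_poly (-M)) a = 0" unfolding cp poly_prod_list
      using a by (auto simp: prod_list_zero_iff)
    then have "eigenvalue (-M) a" using eigenvalue_root_char_poly[OF mM] by simp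
    then obtain v where "eigenvector (-M) v a" unfolding eigenvalue_def by blast
    then have v: "v \<in> carrier_vec n" "v \<noteq> 0\<^sub>v n" "(-M) *\<^sub>v v = a \<cdot>\<^sub>v v"
      unfolding eigenvector_def using M by auto
    have "M *\<^sub>v v = (-a) \<cdot>\<^sub>v v"
    proof -
      have "M *\<^sub>v v = - ((-M) *\<^sub>v v)" using M v(1) by (intro eq_vecI) (auto simp: scalar_prod_def sum_negf)
      then show ?thesis using v(3) v(1) by (auto intro!: eq_vecI)
    qed
    from ev[OF v(1,2) this] show ?thesis by simp
  qed
  have "poly (char_poly (-M)) 1 = (\<Prod>a\<leftarrow>as. 1 - a)" unfolding cp poly_prod_list
    by (simp add: o_def)
  also have "1 \<le> \<dots>" using each by (intro prod_list_ge_one) auto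
  finally show ?thesis using d by simp
qed

lemma minv: fixes A :: "complex mat"
  assumes A: "A \<in> carrier_mat n n" and inv: "invertible_mat A"
  shows "minv A \<in> carrier_mat n n" "A * minv A = 1\<^sub>m n" "minv A * A = 1\<^sub>m n"
proof -
  from inv obtain B where AB: "A * B = 1\<^sub>m (dim_row A)" and BA: "B * A = 1\<^sub>m (dim_row B)"
    unfolding invertible_mat_def inverts_mat_def by blast
  have B: "B \<in> carrier_mat n n"
  proof -
    have "dim_col B = n" using arg_cong[OF AB, of dim_col] A by simp
    moreover have "dim_row B = n" using arg_cong[OF BA, of dim_col] A by simp
    ultimately show ?thesis by auto
  qed
  have "A \<in> Units (ring_mat TYPE(complex) n ())"
    using A B AB BA unfolding Units_def ring_mat_def by auto
  then have "mat_inverse A \<noteq> None" using mat_inverse(1)[OF A, of "()"] by auto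
  then obtain C where C: "mat_inverse A = Some C" by auto
  from mat_inverse(2)[OF A C] show "minv A \<in> carrier_mat n n" "A * minv A = 1\<^sub>m n" "minv A * A = 1\<^sub>m n"
    unfolding minv_def C by auto
qed

lemma minv_unique: fixes A B :: "complex mat"
  assumes A: "A \<in> carrier_mat n n" and B: "B \<in> carrier_mat n n" and AB: "A * B = 1\<^sub>m n"
  shows "invertible_mat A" "minv A = B"
proof -
  have BA: "B * A = 1\<^sub>m n" by (rule mat_mult_left_right_inverse[OF A B AB])
  show inv: "invertible_mat A" unfolding invertible_mat_def inverts_mat_def
    using A B AB BA by (auto intro!: exI[of _ B])
  note m = minv[OF A inv]
  have "minv A = (B * A) * minv A" using BA m(1) by simp
  also have "\<dots> = B * (A * minv A)" by (rule assoc_mult_mat[OF B A m(1)])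
  also have "\<dots> = B" using m(2) B by simp
  finally show "minv A = B" .
qed

definition herm :: "complex mat \<Rightarrow> bool" where "herm A = (mat_adjoint A = A)"

lemma minv_herm: fixes A :: "complex mat"
  assumes A: "A \<in> carrier_mat n n" and inv: "invertible_mat A" and h: "herm A"
  shows "herm (minv A)"
proof -
  note m = minv[OF A inv]
  have "mat_adjoint (minv A) * A = mat_adjoint (A * minv A)"
    using adj_mult[OF A m(1)] h unfolding herm_def by simp
  also have "\<dots> = 1\<^sub>m n" using m(2) by simp
  finally have l: "mat_adjoint (minv A) * A = 1\<^sub>m n" .
  have AHi: "mat_adjoint (minv A) \<in> carrier_mat n n" by (rule adj_carrier'[OF m(1)])
  have "A * mat_adjoint (minv A) = 1\<^sub>m n" by (rule mat_mult_left_right_inverse[OF AHi A l])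
  then have "minv A = mat_adjoint (minv A)" by (rule minv_unique(2)[OF A AHi])
  then show ?thesis unfolding herm_def by simp
qed

lemma qf_add: fixes A B :: "complex mat"
  assumes "A \<in> carrier_mat n n" "B \<in> carrier_mat n n" "v \<in> carrier_vec n"
  shows "qf (A + B) v = qf A v + qf B v"
  unfolding qf_def using assms
  by (simp add: add_mult_distrib_mat_vec[of _ n n] scalar_prod_add_distrib[of _ n])

lemma qf_minus: fixes A B :: "complex mat"
  assumes "A \<in> carrier_mat n n" "B \<in> carrier_mat n n" "v \<in> carrier_vec n"
  shows "qf (A - B) v = qf A v - qf B v"
  unfolding qf_def using assms
  by (simp add: minus_mult_distrib_mat_vec[of _ n n] scalar_prod_minus_distrib[of _ n])

lemma qf_smult: fixes A :: "complex mat"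
  assumes "A \<in> carrier_mat n n" "v \<in> carrier_vec n"
  shows "qf (c \<cdot>\<^sub>m A) v = c * qf A v"
proof -
  have "(c \<cdot>\<^sub>m A) *\<^sub>v v = c \<cdot>\<^sub>v (A *\<^sub>v v)"
    by (rule eq_vecI) (use assms in \<open>auto simp: scalar_prod_def sum_distrib_left mult.assoc\<close>)
  then show ?thesis unfolding qf_def using assms by (simp add: scalar_prod_smult_distrib[of _ n])
qed

lemma qf_one: "v \<in> carrier_vec n \<Longrightarrow> qf (1\<^sub>m n) v = v \<bullet>c v"
  unfolding qf_def by (simp add: conjugate_vec_sprod_comm[of v n v])

lemma qf_eigen: fixes M :: "complex mat"
  assumes "v \<in> carrier_vec n" "M *\<^sub>v v = a \<cdot>\<^sub>v v"
  shows "qf M v = a * (v \<bullet>c v)"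
  unfolding qf_def using assms by (simp add: conjugate_vec_sprod_comm[of v n v])

lemma complex_div_nonneg: fixes a p q :: complex
  assumes "0 \<le> p" "0 < q" "p = a * q" shows "0 \<le> a"
proof -
  from assms(2) have q: "Im q = 0" "Re q > 0" by (auto simp: less_complex_def)
  from assms(1) have p: "Im p = 0" "Re p \<ge> 0" by (auto simp: less_eq_complex_def)
  have "Re p = Re a * Re q" "Im p = Im a * Re q" using assms(3) q by auto
  then show ?thesis using p q by (auto simp: less_eq_complex_def zero_le_mult_iff)
qed

lemma invertible_of_det: fixes A :: "complex mat"
  assumes A: "A \<in> carrier_mat n n" and d: "det A \<noteq> 0"
  shows "invertible_mat A"
proof -
  from det_non_zero_imp_unit[OF A d, of "()"] obtain B where
    "B \<in> carrier_mat n n" "A * B = 1\<^sub>m n" unfolding Units_def ring_mat_def by auto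
  then show ?thesis using minv_unique[OF A] by blast
qed

lemma core1: fixes b C A :: "complex mat"
  assumes b: "b \<in> carrier_mat n N" and C: "C \<in> carrier_mat n n" and hC: "herm C" and pC: "psd C"
    and iC: "invertible_mat C" and A: "A \<in> carrier_mat n N"
    and iS: "invertible_mat (mat_adjoint A * C * A)"
  shows "1 \<le> det (1\<^sub>m N + mat_adjoint (mat_adjoint A * b) * minv (mat_adjoint A * C * A) * (mat_adjoint A * b))"
    "det (1\<^sub>m N + mat_adjoint (mat_adjoint A * b) * minv (mat_adjoint A * C * A) * (mat_adjoint A * b))
     \<le> det (1\<^sub>m N + mat_adjoint b * minv C * b)"
proof -
  define S where "S = mat_adjoint A * C * A"
  define Si where "Si = minv S"
  define Ci where "Ci = minv C"
  define D where "D = mat_adjoint A * b"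
  define X where "X = mat_adjoint D * Si * D"
  define Y where "Y = mat_adjoint b * Ci * b"
  define P where "P = A * Si * mat_adjoint A"
  define R where "R = Ci - P"
  have AH: "mat_adjoint A \<in> carrier_mat N n" using A by (rule adj_carrier')
  have bH: "mat_adjoint b \<in> carrier_mat N n" using b by (rule adj_carrier')
  have S: "S \<in> carrier_mat N N" unfolding S_def using A C by auto
  have iS': "invertible_mat S" using iS unfolding S_def .
  note Sm = minv[OF S iS', folded Si_def]
  note Cm = minv[OF C iC, folded Ci_def]
  have Si: "Si \<in> carrier_mat N N" by (rule Sm(1))
  have Ci: "Ci \<in> carrier_mat n n" by (rule Cm(1))
  have D: "D \<in> carrier_mat N N" unfolding D_def using A b by auto
  have DH: "mat_adjoint D \<in> carrier_mat N N" using D by (rule adj_carrier')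
  have X: "X \<in> carrier_mat N N" unfolding X_def using D Si by auto
  have Y: "Y \<in> carrier_mat N N" unfolding Y_def using b Ci by auto
  have P: "P \<in> carrier_mat n n" unfolding P_def using A Si by auto
  have R: "R \<in> carrier_mat n n" unfolding R_def using P Ci by auto
  have AHC: "mat_adjoint A * C \<in> carrier_mat N n" using AH C by simp
  have ASi: "A * Si \<in> carrier_mat n N" using A Si by simp
  have CA: "C * A \<in> carrier_mat n N" using A C by simp
  have CASi: "C * (A * Si) \<in> carrier_mat n N" using ASi C by simp
  have SiAH: "Si * mat_adjoint A \<in> carrier_mat N n" using AH Si by simp
  have ASiAH: "A * (Si * mat_adjoint A) \<in> carrier_mat n n" using A SiAH by simp
  have bHA: "mat_adjoint b * A \<in> carrier_mat N N" using A bH by simp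
  have AHb: "mat_adjoint A * b \<in> carrier_mat N N" using AH b by simp
  note cr = AH bH S Si Ci D DH X Y P R AHC ASi CA CASi SiAH ASiAH bHA AHb A b C
  note dm = carrier_matD[OF A] carrier_matD[OF b] carrier_matD[OF C] carrier_matD[OF Si] carrier_matD[OF Ci]
    carrier_matD[OF R] carrier_matD[OF P] carrier_matD[OF S] carrier_matD[OF D] carrier_matD[OF X] carrier_matD[OF Y]
  note asc = massoc dm
  have hS: "herm S" unfolding herm_def S_def
  proof -
    have "mat_adjoint (mat_adjoint A * C * A) = mat_adjoint A * mat_adjoint (mat_adjoint A * C)"
      by (rule adj_mult) (use A C in auto)
    also have "mat_adjoint (mat_adjoint A * C) = mat_adjoint C * A"
      using adj_mult[OF AH C] by simp
    finally show "mat_adjoint (mat_adjoint A * C * A) = mat_adjoint A * C * A"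
      using hC A C AH unfolding herm_def by simp
  qed
  have hSi: "herm Si" unfolding Si_def by (rule minv_herm[OF S iS' hS])
  have hCi: "herm Ci" unfolding Ci_def by (rule minv_herm[OF C iC hC])
  have SX: "\<And>Z k. Z \<in> carrier_mat N k \<Longrightarrow> mat_adjoint A * (C * (A * Z)) = S * Z"
  proof -
    fix Z :: "complex mat" and k assume Z: "Z \<in> carrier_mat N (k::nat)"
    have "mat_adjoint A * C * A * Z = mat_adjoint A * C * (A * Z)" by (rule assoc_mult_mat[OF mult_carrier_mat[OF AH C] A Z])
    also have "\<dots> = mat_adjoint A * (C * (A * Z))" by (rule assoc_mult_mat[OF AH C mult_carrier_mat[OF A Z]])
    finally show "mat_adjoint A * (C * (A * Z)) = S * Z" unfolding S_def by simp
  qed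
  have SiS: "\<And>Z k. Z \<in> carrier_mat N k \<Longrightarrow> Si * (S * Z) = Z"
  proof -
    fix Z :: "complex mat" and k assume Z: "Z \<in> carrier_mat N (k::nat)"
    have "Si * (S * Z) = (Si * S) * Z" using Si S Z by simp
    then show "Si * (S * Z) = Z" using Sm(3) Z by simp
  qed
  have SSi: "\<And>Z k. Z \<in> carrier_mat N k \<Longrightarrow> S * (Si * Z) = Z"
  proof -
    fix Z :: "complex mat" and k assume Z: "Z \<in> carrier_mat N (k::nat)"
    have "S * (Si * Z) = (S * Si) * Z" using Si S Z by simp
    then show "S * (Si * Z) = Z" using Sm(2) Z by simp
  qed
  have CiC: "\<And>Z k. Z \<in> carrier_mat n k \<Longrightarrow> Ci * (C * Z) = Z"
  proof -
    fix Z :: "complex mat" and k assume Z: "Z \<in> carrier_mat n (k::nat)"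
    have "Ci * (C * Z) = (Ci * C) * Z" using Ci C Z by simp
    then show "Ci * (C * Z) = Z" using Cm(3) Z by simp
  qed
  have CCi: "\<And>Z k. Z \<in> carrier_mat n k \<Longrightarrow> C * (Ci * Z) = Z"
  proof -
    fix Z :: "complex mat" and k assume Z: "Z \<in> carrier_mat n (k::nat)"
    have "C * (Ci * Z) = (C * Ci) * Z" using Ci C Z by simp
    then show "C * (Ci * Z) = Z" using Cm(2) Z by simp
  qed
  have pSi: "psd Si"
  proof -
    have "psd (mat_adjoint (A * Si) * C * (A * Si))" by (rule psd_congr[OF C _ pC]) (use A Si in auto)
    also have "mat_adjoint (A * Si) * C * (A * Si) = Si"
    proof -
      have "mat_adjoint (A * Si) = Si * mat_adjoint A"
        using adj_mult[OF A Si] hSi unfolding herm_def by simp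
      then have "mat_adjoint (A * Si) * C * (A * Si) = Si * (mat_adjoint A * (C * (A * Si)))"
        by (simp add: asc)
      also have "\<dots> = Si" using SX[OF Si] SSi[of "1\<^sub>m N" N] cr by (simp add: asc)
      finally show ?thesis .
    qed
    finally show ?thesis .
  qed
  have pX: "psd X" unfolding X_def by (rule psd_congr[OF Si D pSi])
  have XP: "X = mat_adjoint b * P * b"
  proof -
    have "mat_adjoint D = mat_adjoint b * A" unfolding D_def using adj_mult[OF AH b] by simp
    then show ?thesis unfolding X_def P_def D_def by (simp add: asc)
  qed
  have PCP: "P * C * P = P"
  proof -
    have "P * C * P = A * (Si * (mat_adjoint A * (C * (A * (Si * mat_adjoint A)))))"
      unfolding P_def by (simp add: asc)
    also have "\<dots> = P" unfolding P_def using SX[of "Si * mat_adjoint A" n] SSi[of "mat_adjoint A" n] cr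
      by (simp add: asc)
    finally show ?thesis .
  qed
  have PCCi: "P * C * Ci = P"
    using CCi[of "1\<^sub>m n" n] P C Ci by simp
  have RCR: "R * C * R = R"
  proof -
    have "R * C = Ci * C - P * C" unfolding R_def by (rule minus_mult_distrib_mat[OF Ci P C])
    also have "\<dots> = 1\<^sub>m n - P * C" using Cm(3) by simp
    finally have "R * C * R = (1\<^sub>m n - P * C) * R" by simp
    also have "\<dots> = R - P * C * R" using P C R by (simp add: minus_mult_distrib_mat[of _ n n])
    also have "P * C * R = P * C * Ci - P * C * P" unfolding R_def
      using P C Ci by (simp add: mult_minus_distrib_mat[of _ n n])
    also have "\<dots> = 0\<^sub>m n n" using PCP PCCi P by simp
    also have "R - 0\<^sub>m n n = R" using R by (intro eq_matI) auto
    finally show ?thesis .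
  qed
  have hR: "herm R" unfolding R_def herm_def
  proof -
    have "mat_adjoint P = P" unfolding P_def using adj_mult[OF ASi AH] adj_mult[OF A Si] hSi
      by (simp add: herm_def asc)
    then show "mat_adjoint (Ci - P) = Ci - P" using adj_minus[OF Ci P] hCi unfolding herm_def by simp
  qed
  have YX: "Y - X = mat_adjoint (R * b) * C * (R * b)"
  proof -
    have "mat_adjoint (R * b) = mat_adjoint b * R" using adj_mult[OF R b] hR unfolding herm_def by simp
    then have "mat_adjoint (R * b) * C * (R * b) = mat_adjoint b * (R * C * R) * b"
      by (simp add: asc)
    also have "\<dots> = mat_adjoint b * R * b" using RCR by (simp add: asc)
    also have "\<dots> = mat_adjoint b * Ci * b - mat_adjoint b * P * b" unfolding R_def
      using bH Ci P b by (simp add: mult_minus_distrib_mat[of _ N n] minus_mult_distrib_mat[of _ N n])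
    finally show ?thesis unfolding Y_def XP by simp
  qed
  have pW: "psd (Y - X)" unfolding YX by (rule psd_congr[OF C _ pC]) (use R b in auto)
  have dX: "1 \<le> det (1\<^sub>m N + X)"
  proof (rule det_ge_one[OF X])
    fix a v assume v: "v \<in> carrier_vec N" "v \<noteq> 0\<^sub>v N" "X *\<^sub>v v = a \<cdot>\<^sub>v v"
    show "0 \<le> a"
      by (rule complex_div_nonneg[of "qf X v" "v \<bullet>c v"])
        (use v pX X in \<open>auto simp: psd_def qf_eigen\<close>)
  qed
  define Q where "Q = 1\<^sub>m N + X"
  have Q: "Q \<in> carrier_mat N N" unfolding Q_def using X by simp
  have "det Q \<noteq> 0"
  proof
    assume "det Q = 0" then show False using dX unfolding Q_def by (simp add: less_eq_complex_def)
  qed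
  then have iQ: "invertible_mat Q" using invertible_of_det[OF Q] by simp
  note Qm = minv[OF Q iQ]
  define Z where "Z = minv Q * (Y - X)"
  have Z: "Z \<in> carrier_mat N N" unfolding Z_def using Qm(1) X Y by simp
  have QZ: "Q * Z = Y - X"
  proof -
    have "Q * Z = (Q * minv Q) * (Y - X)" unfolding Z_def
      by (rule assoc_mult_mat[symmetric, OF Q Qm(1) minus_carrier_mat[OF X]])
    then show ?thesis using Qm(2) X Y by simp
  qed
  have dZ: "1 \<le> det (1\<^sub>m N + Z)"
  proof (rule det_ge_one[OF Z])
    fix a v assume v: "v \<in> carrier_vec N" "v \<noteq> 0\<^sub>v N" "Z *\<^sub>v v = a \<cdot>\<^sub>v v"
    have "(Y - X) *\<^sub>v v = Q *\<^sub>v (Z *\<^sub>v v)"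
    proof -
      have "Q *\<^sub>v (Z *\<^sub>v v) = (Q * Z) *\<^sub>v v" using Q Z v by simp
      also note QZ
      finally show ?thesis by simp
    qed
    also have "\<dots> = a \<cdot>\<^sub>v (Q *\<^sub>v v)" using v Q by (simp add: mult_mat_vec[of _ N N])
    finally have e: "(Y - X) *\<^sub>v v = a \<cdot>\<^sub>v (Q *\<^sub>v v)" .
    have "qf (Y - X) v = a * qf Q v" unfolding qf_def e using v Q by simp
    moreover have "qf Q v = v \<bullet>c v + qf X v" unfolding Q_def
      using qf_add[of "1\<^sub>m N" N X v] qf_one[of v N] v X by simp
    moreover have "0 < v \<bullet>c v" using v by simp
    moreover have "0 \<le> qf X v" using pX v X by (simp add: psd_def)
    moreover have "0 \<le> qf (Y - X) v" using pW v X Y by (simp add: psd_def)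
    ultimately show "0 \<le> a" using complex_div_nonneg[of "qf (Y - X) v" "qf Q v" a]
      by (simp add: add_pos_nonneg)
  qed
  have "1\<^sub>m N + Y = Q * (1\<^sub>m N + Z)"
  proof -
    have "Q * (1\<^sub>m N + Z) = Q + Q * Z" using mult_add_distrib_mat[OF Q one_carrier_mat Z] Q by simp
    also note QZ
    also have "Q + (Y - X) = 1\<^sub>m N + Y" unfolding Q_def using X Y
      by (intro eq_matI) auto
    finally show ?thesis by simp
  qed
  then have "det (1\<^sub>m N + Y) = det Q * det (1\<^sub>m N + Z)" using det_mult[OF Q] Z by simp
  moreover have "det Q * 1 \<le> det Q * det (1\<^sub>m N + Z)"
    by (rule mult_left_mono[OF dZ]) (use dX in \<open>auto simp: Q_def less_eq_complex_def\<close>)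
  ultimately have "det (1\<^sub>m N + X) \<le> det (1\<^sub>m N + Y)" unfolding Q_def by simp
  then show "det (1\<^sub>m N + mat_adjoint (mat_adjoint A * b) * minv (mat_adjoint A * C * A) * (mat_adjoint A * b))
     \<le> det (1\<^sub>m N + mat_adjoint b * minv C * b)"
    unfolding X_def Y_def D_def Si_def S_def Ci_def .
  show "1 \<le> det (1\<^sub>m N + mat_adjoint (mat_adjoint A * b) * minv (mat_adjoint A * C * A) * (mat_adjoint A * b))"
    using dX unfolding X_def D_def Si_def S_def .
qed

lemma core2: fixes b C :: "complex mat"
  assumes b: "b \<in> carrier_mat n N" and C: "C \<in> carrier_mat n n" and hC: "herm C"
    and iC: "invertible_mat C"
    and iB: "invertible_mat (C + b * mat_adjoint b)"
    and iS: "invertible_mat (mat_adjoint (minv (C + b * mat_adjoint b) * b) * C * (minv (C + b * mat_adjoint b) * b))"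
  shows "mat_adjoint (mat_adjoint (minv (C + b * mat_adjoint b) * b) * b)
          * minv (mat_adjoint (minv (C + b * mat_adjoint b) * b) * C * (minv (C + b * mat_adjoint b) * b))
          * (mat_adjoint (minv (C + b * mat_adjoint b) * b) * b) = mat_adjoint b * minv C * b"
proof -
  define B where "B = C + b * mat_adjoint b"
  define Bi where "Bi = minv B"
  define Ci where "Ci = minv C"
  define Ao where "Ao = Bi * b"
  define K where "K = mat_adjoint b * Bi * b"
  define Y where "Y = mat_adjoint b * Ci * b"
  define Sg where "Sg = mat_adjoint Ao * C * Ao"
  define Si where "Si = minv Sg"
  have bH: "mat_adjoint b \<in> carrier_mat N n" using b by (rule adj_carrier')
  have bbH: "b * mat_adjoint b \<in> carrier_mat n n" using b bH by simp
  have B: "B \<in> carrier_mat n n" unfolding B_def using C bbH by simp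
  have iB': "invertible_mat B" using iB unfolding B_def .
  note Bm = minv[OF B iB', folded Bi_def]
  note Cm = minv[OF C iC, folded Ci_def]
  have Bi: "Bi \<in> carrier_mat n n" by (rule Bm(1))
  have Ci: "Ci \<in> carrier_mat n n" by (rule Cm(1))
  have Ao: "Ao \<in> carrier_mat n N" unfolding Ao_def using Bi b by simp
  have AoH: "mat_adjoint Ao \<in> carrier_mat N n" using Ao by (rule adj_carrier')
  have K: "K \<in> carrier_mat N N" unfolding K_def using bH Bi b by simp
  have Y: "Y \<in> carrier_mat N N" unfolding Y_def using bH Ci b by simp
  have Sg: "Sg \<in> carrier_mat N N" unfolding Sg_def using AoH C Ao by simp
  have iSg: "invertible_mat Sg" using iS unfolding Sg_def Ao_def Bi_def B_def .
  note Sm = minv[OF Sg iSg, folded Si_def]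
  have Si: "Si \<in> carrier_mat N N" by (rule Sm(1))
  note dm = carrier_matD[OF b] carrier_matD[OF bH] carrier_matD[OF C] carrier_matD[OF B] carrier_matD[OF Bi]
    carrier_matD[OF Ci] carrier_matD[OF Ao] carrier_matD[OF AoH] carrier_matD[OF K] carrier_matD[OF Y]
    carrier_matD[OF Sg] carrier_matD[OF Si]
  note asc = massoc dm
  have hB: "herm B" unfolding herm_def B_def
    using adj_add[OF C bbH] adj_mult[OF b bH] hC unfolding herm_def by simp
  have hBi: "herm Bi" unfolding Bi_def by (rule minv_herm[OF B iB' hB])
  have AoH_eq: "mat_adjoint Ao = mat_adjoint b * Bi"
    unfolding Ao_def using adj_mult[OF Bi b] hBi unfolding herm_def by simp
  have hK: "herm K" unfolding herm_def K_def
    using adj_mult[OF mult_carrier_mat[OF bH Bi] b] adj_mult[OF bH Bi] hBi unfolding herm_def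
    by (simp add: asc)
  have D_eq: "mat_adjoint Ao * b = K" unfolding AoH_eq K_def ..
  have BZ: "\<And>Z k. Z \<in> carrier_mat n k \<Longrightarrow> B * Z = C * Z + b * (mat_adjoint b * Z)"
  proof -
    fix Z :: "complex mat" and k assume Z: "Z \<in> carrier_mat n k"
    have "B * Z = C * Z + b * mat_adjoint b * Z" unfolding B_def by (rule add_mult_distrib_mat[OF C bbH Z])
    then show "B * Z = C * Z + b * (mat_adjoint b * Z)" using Z by (simp add: asc)
  qed
  have BiB: "\<And>Z k. Z \<in> carrier_mat n k \<Longrightarrow> Bi * (B * Z) = Z"
  proof -
    fix Z :: "complex mat" and k assume Z: "Z \<in> carrier_mat n k"
    have "Bi * (B * Z) = (Bi * B) * Z" using Z by (simp add: asc)
    then show "Bi * (B * Z) = Z" using Bm(3) Z by simp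
  qed
  have BBi: "\<And>Z k. Z \<in> carrier_mat n k \<Longrightarrow> B * (Bi * Z) = Z"
  proof -
    fix Z :: "complex mat" and k assume Z: "Z \<in> carrier_mat n k"
    have "B * (Bi * Z) = (B * Bi) * Z" using Z by (simp add: asc)
    then show "B * (Bi * Z) = Z" using Bm(2) Z by simp
  qed
  have CCi: "\<And>Z k. Z \<in> carrier_mat n k \<Longrightarrow> C * (Ci * Z) = Z"
  proof -
    fix Z :: "complex mat" and k assume Z: "Z \<in> carrier_mat n k"
    have "C * (Ci * Z) = (C * Ci) * Z" using Z by (simp add: asc)
    then show "C * (Ci * Z) = Z" using Cm(2) Z by simp
  qed
  have KY: "K * Y = Y - K"
  proof -
    have Cib: "Ci * b \<in> carrier_mat n N" using Ci b by simp
    have "K * Y = mat_adjoint b * (Bi * (b * (mat_adjoint b * (Ci * b))))"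
      unfolding K_def Y_def by (simp add: asc)
    also have "b * (mat_adjoint b * (Ci * b)) = B * (Ci * b) - C * (Ci * b)"
      using BZ[OF Cib] C Cib b bH by (auto intro!: eq_matI)
    also have "Bi * (B * (Ci * b) - C * (Ci * b)) = Bi * (B * (Ci * b)) - Bi * (C * (Ci * b))"
      by (rule mult_minus_distrib_mat[OF Bi, where nc = N]) (use B C Cib in simp_all)
    also have "\<dots> = Ci * b - Bi * b" using BiB[OF Cib] CCi[OF b] by simp
    also have "mat_adjoint b * (Ci * b - Bi * b) = mat_adjoint b * (Ci * b) - mat_adjoint b * (Bi * b)"
      by (rule mult_minus_distrib_mat[OF bH, where nc = N]) (use Ci Bi b in simp_all)
    also have "\<dots> = Y - K" unfolding Y_def K_def by (simp add: asc)
    finally show ?thesis .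
  qed
  have KKY: "K + K * Y = Y" unfolding KY using K Y by (intro eq_matI) auto
  have Sg_eq: "Sg = K - K * K"
  proof -
    have Bib: "Bi * b \<in> carrier_mat n N" using Bi b by simp
    have "Sg = mat_adjoint b * (Bi * (C * (Bi * b)))"
      unfolding Sg_def AoH_eq by (simp add: asc Ao_def)
    also have "C * (Bi * b) = B * (Bi * b) - b * (mat_adjoint b * (Bi * b))"
      using BZ[OF Bib] C Bib b bH by (auto intro!: eq_matI)
    also have "Bi * (B * (Bi * b) - b * (mat_adjoint b * (Bi * b)))
        = Bi * (B * (Bi * b)) - Bi * (b * (mat_adjoint b * (Bi * b)))"
      by (rule mult_minus_distrib_mat[OF Bi, where nc = N]) (use B bH b Bib in simp_all)
    also have "\<dots> = Bi * b - Bi * (b * (mat_adjoint b * (Bi * b)))" using BiB[OF Bib] by simp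
    also have "mat_adjoint b * (Bi * b - Bi * (b * (mat_adjoint b * (Bi * b))))
       = mat_adjoint b * (Bi * b) - mat_adjoint b * (Bi * (b * (mat_adjoint b * (Bi * b))))"
      by (rule mult_minus_distrib_mat[OF bH, where nc = N]) (use Bi bH b Bib in simp_all)
    also have "\<dots> = K - K * K" unfolding K_def by (simp add: asc)
    finally show ?thesis .
  qed
  have IKIY: "(1\<^sub>m N - K) * (1\<^sub>m N + Y) = 1\<^sub>m N"
  proof -
    have "(1\<^sub>m N - K) * (1\<^sub>m N + Y) = 1\<^sub>m N * (1\<^sub>m N + Y) - K * (1\<^sub>m N + Y)"
      by (rule minus_mult_distrib_mat[where n = N and nr = N and nc = N]) (use K Y in simp_all)
    also have "K * (1\<^sub>m N + Y) = K + K * Y"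
      using mult_add_distrib_mat[OF K one_carrier_mat Y] K by simp
    also have "\<dots> = Y" by (rule KKY)
    finally show ?thesis using Y by (auto intro!: eq_matI)
  qed
  have SgK: "Sg * (1\<^sub>m N + Y) = K"
  proof -
    have "Sg = K * (1\<^sub>m N - K)" unfolding Sg_eq
      using mult_minus_distrib_mat[OF K one_carrier_mat K] K by simp
    then have "Sg * (1\<^sub>m N + Y) = K * ((1\<^sub>m N - K) * (1\<^sub>m N + Y))"
      using K Y by (simp add: asc)
    then show ?thesis using IKIY K by simp
  qed
  have "mat_adjoint K * Si * K = K * Si * (Sg * (1\<^sub>m N + Y))" using hK SgK unfolding herm_def by simp
  also have "\<dots> = K * ((Si * Sg) * (1\<^sub>m N + Y))" using K Y Si Sg by (simp add: asc)
  also have "\<dots> = K + K * Y" using Sm(3) Y K mult_add_distrib_mat[OF K one_carrier_mat Y] by simp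
  also have "\<dots> = Y" by (rule KKY)
  finally have "mat_adjoint K * Si * K = Y" .
  then show ?thesis unfolding D_eq[unfolded Ao_def Bi_def B_def] Si_def Sg_def Ao_def Bi_def B_def Y_def Ci_def
    K_def[symmetric, unfolded Bi_def B_def]
    using D_eq[unfolded Ao_def Bi_def B_def] by simp
qed

lemma meas_cnj: "f \<in> borel_measurable M \<Longrightarrow> (\<lambda>x. cnj (f x :: complex)) \<in> borel_measurable M"
  by (rule borel_measurable_continuous_on) (auto intro: continuous_intros)

lemma L2_prod_integrable: fixes f g :: "'w \<Rightarrow> complex"
  assumes fm: "f \<in> borel_measurable P" and gm: "g \<in> borel_measurable P"
    and fi: "integrable P (\<lambda>\<omega>. (cmod (f \<omega>))^2)" and gi: "integrable P (\<lambda>\<omega>. (cmod (g \<omega>))^2)"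
  shows "integrable P (\<lambda>\<omega>. cnj (f \<omega>) * g \<omega>)"
proof (rule Bochner_Integration.integrable_bound[where f = "\<lambda>\<omega>. (cmod (f \<omega>))^2 + (cmod (g \<omega>))^2"])
  show "integrable P (\<lambda>\<omega>. (cmod (f \<omega>))^2 + (cmod (g \<omega>))^2)" using fi gi by simp
  show "(\<lambda>\<omega>. cnj (f \<omega>) * g \<omega>) \<in> borel_measurable P"
    by (rule borel_measurable_times[OF meas_cnj[OF fm] gm])
  show "AE \<omega> in P. norm (cnj (f \<omega>) * g \<omega>) \<le> norm ((cmod (f \<omega>))^2 + (cmod (g \<omega>))^2)"
  proof (rule AE_I2)
    fix \<omega>
    have a: "0 \<le> cmod (f \<omega>)" "0 \<le> cmod (g \<omega>)" by auto
    have "cmod (f \<omega>) * cmod (g \<omega>) \<le> (cmod (f \<omega>))^2 + (cmod (g \<omega>))^2"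
    proof -
      have "0 \<le> (cmod (f \<omega>) - cmod (g \<omega>))^2" by simp
      moreover have "(cmod (f \<omega>) - cmod (g \<omega>))^2 = (cmod (f \<omega>))^2 - 2 * cmod (f \<omega>) * cmod (g \<omega>) + (cmod (g \<omega>))^2"
        by (simp add: power2_diff)
      moreover have "0 \<le> cmod (f \<omega>) * cmod (g \<omega>)" using a by simp
      ultimately show ?thesis by linarith
    qed
    then show "norm (cnj (f \<omega>) * g \<omega>) \<le> norm ((cmod (f \<omega>))^2 + (cmod (g \<omega>))^2)"
      by (simp add: norm_mult)
  qed
qed

lemma cint_nonneg: fixes f :: "'w \<Rightarrow> complex"
  assumes "\<And>\<omega>. 0 \<le> f \<omega>"
  shows "0 \<le> (LINT \<omega>|P. f \<omega>)"
proof -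
  have "f = (\<lambda>\<omega>. complex_of_real (Re (f \<omega>)))"
    using assms by (auto simp: less_eq_complex_def complex_eq_iff)
  then have "(LINT \<omega>|P. f \<omega>) = of_real (LINT \<omega>|P. Re (f \<omega>))"
    by (metis integral_complex_of_real)
  moreover have "0 \<le> (LINT \<omega>|P. Re (f \<omega>))"
    using assms by (intro Bochner_Integration.integral_nonneg) (auto simp: less_eq_complex_def)
  ultimately show ?thesis by (simp add: less_eq_complex_def)
qed

lemma qf_expand: fixes M :: "complex mat"
  assumes "M \<in> carrier_mat n n" "v \<in> carrier_vec n"
  shows "qf M v = (\<Sum>i<n. \<Sum>j<n. cnj (v $ i) * M $$ (i,j) * v $ j)"
  using assms unfolding qf_def
  by (simp add: scalar_prod_def lessThan_atLeast0 sum_distrib_left mult.assoc)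

lemma mexp_qf: fixes Xf :: "'w \<Rightarrow> complex mat"
  assumes X: "\<And>\<omega>. Xf \<omega> \<in> carrier_mat n n"
    and int: "\<And>i j. i < n \<Longrightarrow> j < n \<Longrightarrow> integrable P (\<lambda>\<omega>. Xf \<omega> $$ (i,j))"
    and v: "v \<in> carrier_vec n"
  shows "qf (mexp P n n Xf) v = (LINT \<omega>|P. qf (Xf \<omega>) v)"
    "integrable P (\<lambda>\<omega>. qf (Xf \<omega>) v)"
proof -
  have E: "mexp P n n Xf \<in> carrier_mat n n" unfolding mexp_def by simp
  have "(LINT \<omega>|P. qf (Xf \<omega>) v) = (LINT \<omega>|P. (\<Sum>i<n. \<Sum>j<n. cnj (v $ i) * Xf \<omega> $$ (i,j) * v $ j))"
    using qf_expand[OF X v] by simp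
  also have "\<dots> = (\<Sum>i<n. \<Sum>j<n. cnj (v $ i) * (LINT \<omega>|P. Xf \<omega> $$ (i,j)) * v $ j)"
  proof -
    have ii: "\<And>i j. i \<in> {..<n} \<Longrightarrow> j \<in> {..<n} \<Longrightarrow> integrable P (\<lambda>\<omega>. cnj (v $ i) * Xf \<omega> $$ (i,j) * v $ j)"
      using int by auto
    have "(LINT \<omega>|P. (\<Sum>i<n. \<Sum>j<n. cnj (v $ i) * Xf \<omega> $$ (i,j) * v $ j))
       = (\<Sum>i<n. LINT \<omega>|P. (\<Sum>j<n. cnj (v $ i) * Xf \<omega> $$ (i,j) * v $ j))"
      by (rule Bochner_Integration.integral_sum) (use ii in auto)
    also have "\<dots> = (\<Sum>i<n. \<Sum>j<n. LINT \<omega>|P. cnj (v $ i) * Xf \<omega> $$ (i,j) * v $ j)"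
      by (intro sum.cong refl Bochner_Integration.integral_sum) (use ii in auto)
    also have "\<dots> = (\<Sum>i<n. \<Sum>j<n. cnj (v $ i) * (LINT \<omega>|P. Xf \<omega> $$ (i,j)) * v $ j)"
      by simp
    finally show ?thesis .
  qed
  also have "\<dots> = qf (mexp P n n Xf) v"
    using qf_expand[OF E v] by (simp add: mexp_def)
  finally show "qf (mexp P n n Xf) v = (LINT \<omega>|P. qf (Xf \<omega>) v)" ..
  show "integrable P (\<lambda>\<omega>. qf (Xf \<omega>) v)"
    unfolding qf_expand[OF X v] using int by (intro Bochner_Integration.integrable_sum) auto
qed

lemma mexp_herm: fixes Xf :: "'w \<Rightarrow> complex mat"
  assumes "\<And>\<omega>. Xf \<omega> \<in> carrier_mat n n" "\<And>\<omega>. herm (Xf \<omega>)"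
  shows "herm (mexp P n n Xf)"
proof -
  have "\<And>\<omega> i j. i < n \<Longrightarrow> j < n \<Longrightarrow> Xf \<omega> $$ (j,i) = cnj (Xf \<omega> $$ (i,j))"
  proof -
    fix \<omega> i j assume "i < n" "j < n"
    then have "mat_adjoint (Xf \<omega>) $$ (j,i) = cnj (Xf \<omega> $$ (i,j))" using assms(1)[of \<omega>] by simp
    then show "Xf \<omega> $$ (j,i) = cnj (Xf \<omega> $$ (i,j))" using assms(2)[of \<omega>] unfolding herm_def by simp
  qed
  note h = this
  show ?thesis unfolding herm_def
  proof (rule eq_matI)
    fix i j assume "i < dim_row (mexp P n n Xf)" "j < dim_col (mexp P n n Xf)"
    then have i: "i < n" and j: "j < n" by (auto simp: mexp_def)
    have "mat_adjoint (mexp P n n Xf) $$ (i, j) = cnj (LINT \<omega>|P. Xf \<omega> $$ (j,i))"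
      using i j by (simp add: mexp_def)
    also have "\<dots> = (LINT \<omega>|P. Xf \<omega> $$ (i,j))"
      using h[OF j i] by simp
    also have "\<dots> = mexp P n n Xf $$ (i, j)" using i j by (simp add: mexp_def)
    finally show "mat_adjoint (mexp P n n Xf) $$ (i, j) = mexp P n n Xf $$ (i, j)" .
  qed (auto simp: mexp_def)
qed

lemma real_sq_int_le: fixes X :: "'w \<Rightarrow> real"
  assumes P: "prob_space P" and i1: "integrable P X" and i2: "integrable P (\<lambda>\<omega>. (X \<omega>)^2)"
  shows "(LINT \<omega>|P. X \<omega>)^2 \<le> (LINT \<omega>|P. (X \<omega>)^2)"
proof -
  interpret prob_space P by (rule P)
  have "variance X = expectation (\<lambda>x. (X x)\<^sup>2) - (expectation X)\<^sup>2"
    by (rule variance_eq[OF i1 i2])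
  moreover have "0 \<le> variance X" by (rule variance_positive)
  ultimately show ?thesis by simp
qed

lemma sq_int_le: fixes f :: "'w \<Rightarrow> complex"
  assumes P: "prob_space P" and i1: "integrable P f" and i2: "integrable P (\<lambda>\<omega>. (cmod (f \<omega>))^2)"
  shows "(cmod (LINT \<omega>|P. f \<omega>))^2 \<le> (LINT \<omega>|P. (cmod (f \<omega>))^2)"
proof -
  have fm: "f \<in> borel_measurable P" using i1 by auto
  have iR: "integrable P (\<lambda>\<omega>. (Re (f \<omega>))^2)"
  proof (rule Bochner_Integration.integrable_bound[OF i2])
    show "(\<lambda>\<omega>. (Re (f \<omega>))\<^sup>2) \<in> borel_measurable P" using fm by measurable
    show "AE \<omega> in P. norm ((Re (f \<omega>))\<^sup>2) \<le> norm ((cmod (f \<omega>))\<^sup>2)"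
      by (rule AE_I2) (simp add: cmod_power2)
  qed
  have iI: "integrable P (\<lambda>\<omega>. (Im (f \<omega>))^2)"
  proof (rule Bochner_Integration.integrable_bound[OF i2])
    show "(\<lambda>\<omega>. (Im (f \<omega>))\<^sup>2) \<in> borel_measurable P" using fm by measurable
    show "AE \<omega> in P. norm ((Im (f \<omega>))\<^sup>2) \<le> norm ((cmod (f \<omega>))\<^sup>2)"
      by (rule AE_I2) (simp add: cmod_power2)
  qed
  have r: "(LINT \<omega>|P. Re (f \<omega>))^2 \<le> (LINT \<omega>|P. (Re (f \<omega>))^2)"
    by (rule real_sq_int_le[OF P _ iR]) (use i1 in auto)
  have im: "(LINT \<omega>|P. Im (f \<omega>))^2 \<le> (LINT \<omega>|P. (Im (f \<omega>))^2)"
    by (rule real_sq_int_le[OF P _ iI]) (use i1 in auto)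
  have "(cmod (LINT \<omega>|P. f \<omega>))^2 = (Re (LINT \<omega>|P. f \<omega>))^2 + (Im (LINT \<omega>|P. f \<omega>))^2"
    by (rule cmod_power2)
  also have "Re (LINT \<omega>|P. f \<omega>) = (LINT \<omega>|P. Re (f \<omega>))" using i1 by simp
  also have "Im (LINT \<omega>|P. f \<omega>) = (LINT \<omega>|P. Im (f \<omega>))" using i1 by simp
  also have "(LINT \<omega>|P. (cmod (f \<omega>))^2) = (LINT \<omega>|P. (Re (f \<omega>))^2) + (LINT \<omega>|P. (Im (f \<omega>))^2)"
    using iR iI by (simp add: cmod_power2)
  ultimately show ?thesis using r im by simp
qed

lemma msum_carrier[simp]: "msum nr nc f I \<in> carrier_mat nr nc"
  unfolding msum_def by simp

lemma msum_empty: "msum nr nc f {} = 0\<^sub>m nr nc"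
  unfolding msum_def by (intro eq_matI) auto

lemma msum_insert: assumes "finite I" "x \<notin> I" "f x \<in> carrier_mat nr nc"
  shows "msum nr nc f (insert x I) = f x + msum nr nc f I"
  using assms unfolding msum_def by (intro eq_matI) auto

lemma msum_mult: fixes f :: "'i \<Rightarrow> complex mat"
  assumes I: "finite I" and f: "\<And>l. l \<in> I \<Longrightarrow> f l \<in> carrier_mat n n"
    and Lc: "Lm \<in> carrier_mat N n" and Rc: "Rm \<in> carrier_mat n N"
  shows "msum N N (\<lambda>l. Lm * f l * Rm) I = Lm * msum n n f I * Rm"
  using I f
proof (induct I rule: finite_induct)
  case empty
  then show ?case using Lc Rc by (simp add: msum_empty)
next
  case (insert x I)
  have fx: "f x \<in> carrier_mat n n" using insert by simp
  have IH: "msum N N (\<lambda>l. Lm * f l * Rm) I = Lm * msum n n f I * Rm" using insert by simp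
  have "msum N N (\<lambda>l. Lm * f l * Rm) (insert x I) = Lm * f x * Rm + msum N N (\<lambda>l. Lm * f l * Rm) I"
    by (rule msum_insert) (use insert fx Lc Rc in auto)
  also have "\<dots> = Lm * f x * Rm + Lm * msum n n f I * Rm" unfolding IH ..
  also have "\<dots> = (Lm * f x + Lm * msum n n f I) * Rm"
    by (rule add_mult_distrib_mat[symmetric]) (use fx Lc Rc in auto)
  also have "Lm * f x + Lm * msum n n f I = Lm * (f x + msum n n f I)"
    by (rule mult_add_distrib_mat[symmetric]) (use fx Lc in auto)
  also have "f x + msum n n f I = msum n n f (insert x I)"
    by (rule msum_insert[symmetric]) (use insert fx in auto)
  finally show ?case .
qed

lemma msum_qf: fixes f :: "'i \<Rightarrow> complex mat"
  assumes I: "finite I" and f: "\<And>l. l \<in> I \<Longrightarrow> f l \<in> carrier_mat n n" and v: "v \<in> carrier_vec n"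
  shows "qf (msum n n f I) v = (\<Sum>l\<in>I. qf (f l) v)"
  using I f
proof (induct I rule: finite_induct)
  case empty
  have "0\<^sub>m n n *\<^sub>v v = 0\<^sub>v n" using v by (intro eq_vecI) (auto simp: scalar_prod_def)
  then show ?case using v by (simp add: msum_empty qf_def scalar_prod_def)
next
  case (insert x I)
  have fx: "f x \<in> carrier_mat n n" using insert by simp
  have "msum n n f (insert x I) = f x + msum n n f I"
    by (rule msum_insert) (use insert fx in auto)
  then show ?case using insert fx v by (simp add: qf_add[of _ n])
qed

lemma msum_herm: fixes f :: "'i \<Rightarrow> complex mat"
  assumes I: "finite I" and f: "\<And>l. l \<in> I \<Longrightarrow> f l \<in> carrier_mat n n" and h: "\<And>l. l \<in> I \<Longrightarrow> herm (f l)"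
  shows "herm (msum n n f I)"
  using I f h
proof (induct I rule: finite_induct)
  case empty
  then show ?case unfolding herm_def msum_empty by (intro eq_matI) auto
next
  case (insert x I)
  have fx: "f x \<in> carrier_mat n n" using insert by simp
  have e: "msum n n f (insert x I) = f x + msum n n f I"
    by (rule msum_insert) (use insert fx in auto)
  show ?case unfolding e herm_def adj_add[OF fx msum_carrier] using insert
    by (simp add: herm_def)
qed

lemma sum_blocks: "(\<Sum>i<M*N. g i) = (\<Sum>m<M. \<Sum>r<N. g (m*N + r :: nat))"
proof -
  have "(\<Sum>i<M*N. g i) = (\<Sum>m<M. \<Sum>i\<in>{m*N..<m*N+N}. g i)"
    by (rule sum.nat_group[symmetric])
  also have "\<dots> = (\<Sum>m<M. \<Sum>r<N. g (m*N + r))"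
  proof (rule sum.cong[OF refl])
    fix m
    show "(\<Sum>i\<in>{m*N..<m*N+N}. g i) = (\<Sum>r<N. g (m*N + r))"
      using sum.shift_bounds_nat_ivl[of g 0 "m*N" N]
      by (simp add: lessThan_atLeast0 add.commute)
  qed
  finally show ?thesis .
qed

context
  fixes P :: "'w measure"
    and M L K N k :: nat
    and H V :: "nat \<Rightarrow> nat \<Rightarrow> 'w \<Rightarrow> complex mat"
    and F :: "nat \<Rightarrow> complex mat"
  assumes P: "prob_space P"
    and k: "k < K"
    and H_dim: "\<And>m l \<omega>. m < M \<Longrightarrow> l < K \<Longrightarrow> H m l \<omega> \<in> carrier_mat L N"
    and V_dim: "\<And>m l \<omega>. m < M \<Longrightarrow> l < K \<Longrightarrow> V m l \<omega> \<in> carrier_mat L N"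
    and H_meas: "\<And>m l i j. m < M \<Longrightarrow> l < K \<Longrightarrow> i < L \<Longrightarrow> j < N \<Longrightarrow>
                   (\<lambda>\<omega>. H m l \<omega> $$ (i,j)) \<in> borel_measurable P"
    and V_meas: "\<And>m l i j. m < M \<Longrightarrow> l < K \<Longrightarrow> i < L \<Longrightarrow> j < N \<Longrightarrow>
                   (\<lambda>\<omega>. V m l \<omega> $$ (i,j)) \<in> borel_measurable P"
    and H_L2: "\<And>m l i j. m < M \<Longrightarrow> l < K \<Longrightarrow> i < L \<Longrightarrow> j < N \<Longrightarrow>
                   integrable P (\<lambda>\<omega>. (cmod (H m l \<omega> $$ (i,j)))^2)"
    and V_L2: "\<And>m l i j. m < M \<Longrightarrow> l < K \<Longrightarrow> i < L \<Longrightarrow> j < N \<Longrightarrow>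
                   integrable P (\<lambda>\<omega>. (cmod (V m l \<omega> $$ (i,j)))^2)"
    and F_dim: "\<And>l. l < K \<Longrightarrow> F l \<in> carrier_mat N N"
    and GFG_int: "\<And>l i j. l < K \<Longrightarrow> i < M*N \<Longrightarrow> j < M*N \<Longrightarrow>
                   integrable P (\<lambda>\<omega>. (Gmat M N V H k l \<omega> * Fbar F l
                                       * mat_adjoint (Gmat M N V H k l \<omega>)) $$ (i,j))"
begin

lemma G_carrier: "Gmat M N V H k l \<omega> \<in> carrier_mat (M*N) N"
  unfolding Gmat_def by simp

lemma div_lt: "i < M * N \<Longrightarrow> i div N < M"
  by (simp add: less_mult_imp_div_less)

lemma G_entry: assumes i: "i < M*N" and j: "j < N" and l: "l < K"
  shows "Gmat M N V H k l \<omega> $$ (i,j) =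
    (\<Sum>p<L. cnj (V (i div N) k \<omega> $$ (p, i mod N)) * H (i div N) l \<omega> $$ (p,j))"
proof -
  have m: "i div N < M" using div_lt[OF i] .
  have N0: "0 < N" using j by simp
  have r: "i mod N < N" using N0 by simp
  note Vd = V_dim[OF m k, of \<omega>] and Hd = H_dim[OF m l, of \<omega>]
  have "Gmat M N V H k l \<omega> $$ (i,j) = (mat_adjoint (V (i div N) k \<omega>) * H (i div N) l \<omega>) $$ (i mod N, j)"
    unfolding Gmat_def using i j by simp
  also have "\<dots> = (\<Sum>p<L. cnj (V (i div N) k \<omega> $$ (p, i mod N)) * H (i div N) l \<omega> $$ (p,j))"
    using Vd Hd r j by (simp add: scalar_prod_def lessThan_atLeast0)
  finally show ?thesis .
qed

lemma G_int: assumes i: "i < M*N" and j: "j < N" and l: "l < K"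
  shows "integrable P (\<lambda>\<omega>. Gmat M N V H k l \<omega> $$ (i,j))"
proof -
  have m: "i div N < M" using div_lt[OF i] .
  have N0: "0 < N" using j by simp
  have r: "i mod N < N" using N0 by simp
  show ?thesis unfolding G_entry[OF i j l]
  proof (intro Bochner_Integration.integrable_sum L2_prod_integrable)
    fix p assume "p \<in> {..<L}" then have p: "p < L" by simp
    show "(\<lambda>\<omega>. V (i div N) k \<omega> $$ (p, i mod N)) \<in> borel_measurable P" by (rule V_meas[OF m k p r])
    show "(\<lambda>\<omega>. H (i div N) l \<omega> $$ (p, j)) \<in> borel_measurable P" by (rule H_meas[OF m l p j])
    show "integrable P (\<lambda>\<omega>. (cmod (V (i div N) k \<omega> $$ (p, i mod N)))\<^sup>2)" by (rule V_L2[OF m k p r])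
    show "integrable P (\<lambda>\<omega>. (cmod (H (i div N) l \<omega> $$ (p, j)))\<^sup>2)" by (rule H_L2[OF m l p j])
  qed
qed

lemma VV_int: assumes m: "m < M" and r: "r < N" and r': "r' < N"
  shows "integrable P (\<lambda>\<omega>. (mat_adjoint (V m k \<omega>) * V m k \<omega>) $$ (r,r'))"
proof -
  have e: "\<And>\<omega>. (mat_adjoint (V m k \<omega>) * V m k \<omega>) $$ (r,r') = (\<Sum>p<L. cnj (V m k \<omega> $$ (p, r)) * V m k \<omega> $$ (p,r'))"
  proof -
    fix \<omega> show "(mat_adjoint (V m k \<omega>) * V m k \<omega>) $$ (r,r') = (\<Sum>p<L. cnj (V m k \<omega> $$ (p, r)) * V m k \<omega> $$ (p,r'))"
      using V_dim[OF m k, of \<omega>] r r' by (simp add: scalar_prod_def lessThan_atLeast0)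
  qed
  show ?thesis unfolding e
  proof (intro Bochner_Integration.integrable_sum L2_prod_integrable)
    fix p assume "p \<in> {..<L}" then have p: "p < L" by simp
    show "(\<lambda>\<omega>. V m k \<omega> $$ (p, r)) \<in> borel_measurable P" by (rule V_meas[OF m k p r])
    show "(\<lambda>\<omega>. V m k \<omega> $$ (p, r')) \<in> borel_measurable P" by (rule V_meas[OF m k p r'])
    show "integrable P (\<lambda>\<omega>. (cmod (V m k \<omega> $$ (p, r)))\<^sup>2)" by (rule V_L2[OF m k p r])
    show "integrable P (\<lambda>\<omega>. (cmod (V m k \<omega> $$ (p, r')))\<^sup>2)" by (rule V_L2[OF m k p r'])
  qed
qed

definition Qm :: "nat \<Rightarrow> complex mat" where
  "Qm m = mexp P N N (\<lambda>\<omega>. mat_adjoint (V m k \<omega>) * V m k \<omega>)"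

lemma VV_carrier: "m < M \<Longrightarrow> mat_adjoint (V m k \<omega>) * V m k \<omega> \<in> carrier_mat N N"
  using V_dim[OF _ k, of m \<omega>] adj_carrier'[OF V_dim[OF _ k, of m \<omega>]] by simp

lemma VV_form: "m < M \<Longrightarrow> mat_adjoint (V m k \<omega>) * V m k \<omega> = mat_adjoint (V m k \<omega>) * 1\<^sub>m L * V m k \<omega>"
  using V_dim[OF _ k, of m \<omega>] adj_carrier'[OF V_dim[OF _ k, of m \<omega>]] by simp

lemma Qm_herm: "m < M \<Longrightarrow> herm (Qm m)"
  unfolding Qm_def
proof (rule mexp_herm)
  fix \<omega> assume m: "m < M"
  show "mat_adjoint (V m k \<omega>) * V m k \<omega> \<in> carrier_mat N N" by (rule VV_carrier[OF m])
  show "herm (mat_adjoint (V m k \<omega>) * V m k \<omega>)" unfolding herm_def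
    using adj_mult[OF adj_carrier'[OF V_dim[OF m k, of \<omega>]] V_dim[OF m k, of \<omega>]] by simp
qed

lemma Qm_psd: assumes m: "m < M" and w: "w \<in> carrier_vec N" shows "0 \<le> qf (Qm m) w"
proof -
  have "qf (Qm m) w = (LINT \<omega>|P. qf (mat_adjoint (V m k \<omega>) * V m k \<omega>) w)"
    unfolding Qm_def by (rule mexp_qf(1)[OF VV_carrier[OF m] VV_int[OF m] w])
  also have "0 \<le> \<dots>"
  proof (rule cint_nonneg)
    fix \<omega>
    have "qf (mat_adjoint (V m k \<omega>) * V m k \<omega>) w = qf (1\<^sub>m L) (V m k \<omega> *\<^sub>v w)"
      unfolding VV_form[OF m] by (rule qf_congr[OF one_carrier_mat V_dim[OF m k] w])
    also have "\<dots> = (V m k \<omega> *\<^sub>v w) \<bullet>c (V m k \<omega> *\<^sub>v w)"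
      by (rule qf_one) (use V_dim[OF m k, of \<omega>] w in simp)
    finally show "0 \<le> qf (mat_adjoint (V m k \<omega>) * V m k \<omega>) w" by (simp add: conjugate_square_ge_0_vec)
  qed
  finally show ?thesis .
qed

lemma S_entry: assumes "i < M*N" "j < M*N"
  shows "Smat P M N V k $$ (i,j) = (if i div N = j div N then Qm (i div N) $$ (i mod N, j mod N) else 0)"
  using assms unfolding Smat_def Qm_def by simp

lemma S_carrier: "Smat P M N V k \<in> carrier_mat (M*N) (M*N)"
  unfolding Smat_def by simp

lemma S_herm: "herm (Smat P M N V k)"
  unfolding herm_def
proof (rule eq_matI)
  fix i j assume "i < dim_row (Smat P M N V k)" "j < dim_col (Smat P M N V k)"
  then have i: "i < M*N" and j: "j < M*N" using S_carrier by auto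
  have N0: "0 < N" using i by (cases N) auto
  have ri: "i mod N < N" and rj: "j mod N < N" using N0 by auto
  show "mat_adjoint (Smat P M N V k) $$ (i, j) = Smat P M N V k $$ (i, j)"
  proof (cases "i div N = j div N")
    case True
    have m: "i div N < M" using div_lt[OF i] .
    have Qc: "Qm (i div N) \<in> carrier_mat N N" unfolding Qm_def mexp_def by simp
    have "mat_adjoint (Qm (i div N)) $$ (i mod N, j mod N) = Qm (i div N) $$ (i mod N, j mod N)"
      using Qm_herm[OF m] unfolding herm_def by simp
    then have "cnj (Qm (i div N) $$ (j mod N, i mod N)) = Qm (i div N) $$ (i mod N, j mod N)"
      using Qc ri rj by simp
    then show ?thesis using i j S_carrier True by (simp add: S_entry)
  next
    case False
    then show ?thesis using i j S_carrier by (simp add: S_entry)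
  qed
qed (use S_carrier in auto)

lemma S_qf: assumes v: "v \<in> carrier_vec (M*N)"
  shows "qf (Smat P M N V k) v = (\<Sum>m<M. qf (Qm m) (vec N (\<lambda>r. v $ (m*N + r))))"
proof -
  let ?S = "Smat P M N V k"
  let ?w = "\<lambda>m. vec N (\<lambda>r. v $ (m*N + r))"
  have Qc: "\<And>m. Qm m \<in> carrier_mat N N" unfolding Qm_def mexp_def by simp
  have ent: "\<And>m r m' r'. m < M \<Longrightarrow> r < N \<Longrightarrow> m' < M \<Longrightarrow> r' < N \<Longrightarrow>
     ?S $$ (m*N+r, m'*N+r') = (if m = m' then Qm m $$ (r, r') else 0)"
  proof -
    fix m r m' r' assume a: "m < M" "r < N" "m' < M" "r' < N"
    have i: "m*N+r < M*N" using a
      by (metis add.commute add_less_cancel_left less_imp_Suc_add mult_Suc nat_mult_less_cancel_disj trans_less_add2 less_le_trans mult_le_mono1 Suc_leI)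
    have j: "m'*N+r' < M*N" using a
      by (metis add.commute add_less_cancel_left less_imp_Suc_add mult_Suc nat_mult_less_cancel_disj trans_less_add2 less_le_trans mult_le_mono1 Suc_leI)
    have d: "(m*N+r) div N = m" "(m*N+r) mod N = r" "(m'*N+r') div N = m'" "(m'*N+r') mod N = r'"
      using a by auto
    show "?S $$ (m*N+r, m'*N+r') = (if m = m' then Qm m $$ (r, r') else 0)"
      by (simp only: S_entry[OF i j] d)
  qed
  have "qf ?S v = (\<Sum>i<M*N. \<Sum>j<M*N. cnj (v $ i) * ?S $$ (i,j) * v $ j)"
    by (rule qf_expand[OF S_carrier v])
  also have "\<dots> = (\<Sum>m<M. \<Sum>r<N. \<Sum>m'<M. \<Sum>r'<N. cnj (v $ (m*N+r)) * ?S $$ (m*N+r, m'*N+r') * v $ (m'*N+r'))"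
    by (simp add: sum_blocks[of _ M N])
  also have "\<dots> = (\<Sum>m<M. \<Sum>r<N. \<Sum>m'<M. \<Sum>r'<N. if m = m' then cnj (v $ (m*N+r)) * Qm m $$ (r, r') * v $ (m'*N+r') else 0)"
    by (intro sum.cong refl) (simp add: ent)
  also have "\<dots> = (\<Sum>m<M. \<Sum>r<N. \<Sum>r'<N. cnj (v $ (m*N+r)) * Qm m $$ (r, r') * v $ (m*N+r'))"
  proof (rule sum.cong[OF refl], rule sum.cong[OF refl])
    fix m r assume m: "m \<in> {..<M}"
    have "(\<Sum>m'<M. \<Sum>r'<N. if m = m' then cnj (v $ (m*N+r)) * Qm m $$ (r, r') * v $ (m'*N+r') else 0)
      = (\<Sum>m'<M. if m = m' then (\<Sum>r'<N. cnj (v $ (m*N+r)) * Qm m $$ (r, r') * v $ (m'*N+r')) else 0)"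
      by (intro sum.cong refl) auto
    also have "\<dots> = (\<Sum>r'<N. cnj (v $ (m*N+r)) * Qm m $$ (r, r') * v $ (m*N+r'))"
      using m by (simp add: sum.delta)
    finally show "(\<Sum>m'<M. \<Sum>r'<N. if m = m' then cnj (v $ (m*N+r)) * Qm m $$ (r, r') * v $ (m'*N+r') else 0)
      = (\<Sum>r'<N. cnj (v $ (m*N+r)) * Qm m $$ (r, r') * v $ (m*N+r'))" .
  qed
  also have "\<dots> = (\<Sum>m<M. qf (Qm m) (?w m))"
    by (intro sum.cong refl) (simp add: qf_expand[OF Qc])
  finally show ?thesis .
qed

lemma S_psd: assumes v: "v \<in> carrier_vec (M*N)" shows "0 \<le> qf (Smat P M N V k) v"
  unfolding S_qf[OF v] by (intro sum_nonneg Qm_psd) auto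

lemma z_cnj: "z * cnj z = (complex_of_real (cmod z))^2"
  by (metis complex_norm_square of_real_power)

lemma sq_vec: "w \<in> carrier_vec n \<Longrightarrow> w \<bullet>c w = complex_of_real (\<Sum>i<n. (cmod (w $ i))^2)"
  by (simp add: scalar_prod_def lessThan_atLeast0 z_cnj)

definition Tm :: "nat \<Rightarrow> 'w \<Rightarrow> complex mat" where
  "Tm l \<omega> = mat_adjoint (F l) * mat_adjoint (Gmat M N V H k l \<omega>)"

lemma Tm_carrier: "l < K \<Longrightarrow> Tm l \<omega> \<in> carrier_mat N (M*N)"
  unfolding Tm_def using adj_carrier'[OF F_dim] adj_carrier'[OF G_carrier] by (meson mult_carrier_mat)

lemma X_form: assumes l: "l < K"
  shows "Gmat M N V H k l \<omega> * Fbar F l * mat_adjoint (Gmat M N V H k l \<omega>) = mat_adjoint (Tm l \<omega>) * 1\<^sub>m N * Tm l \<omega>"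
proof -
  let ?G = "Gmat M N V H k l \<omega>"
  have G: "?G \<in> carrier_mat (M*N) N" by (rule G_carrier)
  have GH: "mat_adjoint ?G \<in> carrier_mat N (M*N)" by (rule adj_carrier'[OF G])
  have Fl: "F l \<in> carrier_mat N N" by (rule F_dim[OF l])
  have FH: "mat_adjoint (F l) \<in> carrier_mat N N" by (rule adj_carrier'[OF Fl])
  have "mat_adjoint (Tm l \<omega>) = ?G * F l" unfolding Tm_def using adj_mult[OF FH GH] by simp
  moreover have "?G * F l \<in> carrier_mat (M*N) N" using G Fl by simp
  ultimately show ?thesis unfolding Tm_def Fbar_def
    using G GH Fl FH by (simp add: massoc carrier_matD)
qed

lemma X_carrier: "l < K \<Longrightarrow> Gmat M N V H k l \<omega> * Fbar F l * mat_adjoint (Gmat M N V H k l \<omega>) \<in> carrier_mat (M*N) (M*N)"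
  unfolding X_form using Tm_carrier[of l \<omega>] adj_carrier'[OF Tm_carrier[of l \<omega>]] by simp

lemma X_qf: assumes l: "l < K" and v: "v \<in> carrier_vec (M*N)"
  shows "qf (Gmat M N V H k l \<omega> * Fbar F l * mat_adjoint (Gmat M N V H k l \<omega>)) v = (Tm l \<omega> *\<^sub>v v) \<bullet>c (Tm l \<omega> *\<^sub>v v)"
  unfolding X_form[OF l] qf_congr[OF one_carrier_mat Tm_carrier[OF l] v]
  by (rule qf_one) (use Tm_carrier[OF l, of \<omega>] v in simp)

lemma X_herm: assumes l: "l < K" shows "herm (Gmat M N V H k l \<omega> * Fbar F l * mat_adjoint (Gmat M N V H k l \<omega>))"
proof -
  have T: "Tm l \<omega> \<in> carrier_mat N (M*N)" by (rule Tm_carrier[OF l])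
  have TH: "mat_adjoint (Tm l \<omega>) \<in> carrier_mat (M*N) N" by (rule adj_carrier'[OF T])
  have e: "mat_adjoint (Tm l \<omega>) * 1\<^sub>m N * Tm l \<omega> = mat_adjoint (Tm l \<omega>) * Tm l \<omega>" by (simp add: right_mult_one_mat[OF TH])
  show ?thesis unfolding X_form[OF l] herm_def e using adj_mult[OF TH T] by simp
qed

lemma E_carrier: "EGFG P M N V H F k l \<in> carrier_mat (M*N) (M*N)"
  unfolding EGFG_def mexp_def by simp

lemma E_herm: "l < K \<Longrightarrow> herm (EGFG P M N V H F k l)"
  unfolding EGFG_def by (rule mexp_herm[OF X_carrier X_herm])

lemma E_qf: assumes l: "l < K" and v: "v \<in> carrier_vec (M*N)"
  shows "qf (EGFG P M N V H F k l) v = (LINT \<omega>|P. (Tm l \<omega> *\<^sub>v v) \<bullet>c (Tm l \<omega> *\<^sub>v v))"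
    "integrable P (\<lambda>\<omega>. (Tm l \<omega> *\<^sub>v v) \<bullet>c (Tm l \<omega> *\<^sub>v v))"
  using mexp_qf[OF X_carrier[OF l] GFG_int[OF l] v] X_qf[OF l v]
  unfolding EGFG_def by simp_all

lemma E_psd: assumes l: "l < K" and v: "v \<in> carrier_vec (M*N)"
  shows "0 \<le> qf (EGFG P M N V H F k l) v"
  unfolding E_qf[OF l v] by (rule cint_nonneg) (simp add: conjugate_square_ge_0_vec)

lemma Tv_entry: assumes Gx: "Gx \<in> carrier_mat (M*N) N" and v: "v \<in> carrier_vec (M*N)" and i: "i < N"
  shows "((mat_adjoint (F k) * mat_adjoint Gx) *\<^sub>v v) $ i
     = (\<Sum>j<N. cnj (F k $$ (j,i)) * (\<Sum>p<M*N. cnj (Gx $$ (p,j)) * v $ p))"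
proof -
  have Fk: "F k \<in> carrier_mat N N" by (rule F_dim[OF k])
  have FH: "mat_adjoint (F k) \<in> carrier_mat N N" by (rule adj_carrier'[OF Fk])
  have GH: "mat_adjoint Gx \<in> carrier_mat N (M*N)" by (rule adj_carrier'[OF Gx])
  have "(mat_adjoint (F k) * mat_adjoint Gx) *\<^sub>v v = mat_adjoint (F k) *\<^sub>v (mat_adjoint Gx *\<^sub>v v)"
    by (rule assoc_mult_mat_vec[OF FH GH v])
  then show ?thesis using Fk Gx v i by (simp add: scalar_prod_def lessThan_atLeast0)
qed

lemma y_int: assumes v: "v \<in> carrier_vec (M*N)" and i: "i < N"
  shows "integrable P (\<lambda>\<omega>. (Tm k \<omega> *\<^sub>v v) $ i)"
  unfolding Tm_def Tv_entry[OF G_carrier v i]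
  using G_int[OF _ _ k] by (intro Bochner_Integration.integrable_sum integrable_mult_right integrable_mult_left integrable_cnj) auto

lemma bHv: assumes v: "v \<in> carrier_vec (M*N)" and i: "i < N"
  shows "(mat_adjoint (EG P M N V H k * F k) *\<^sub>v v) $ i = (LINT \<omega>|P. (Tm k \<omega> *\<^sub>v v) $ i)"
proof -
  let ?g = "EG P M N V H k"
  have g: "?g \<in> carrier_mat (M*N) N" unfolding EG_def mexp_def by simp
  have Fk: "F k \<in> carrier_mat N N" by (rule F_dim[OF k])
  have gij: "\<And>p j. p < M*N \<Longrightarrow> j < N \<Longrightarrow> ?g $$ (p,j) = (LINT \<omega>|P. Gmat M N V H k k \<omega> $$ (p,j))"
    unfolding EG_def mexp_def by simp
  have "mat_adjoint (?g * F k) = mat_adjoint (F k) * mat_adjoint ?g" by (rule adj_mult[OF g Fk])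
  then have "(mat_adjoint (?g * F k) *\<^sub>v v) $ i = (\<Sum>j<N. cnj (F k $$ (j,i)) * (\<Sum>p<M*N. cnj (?g $$ (p,j)) * v $ p))"
    using Tv_entry[OF g v i] by simp
  also have "\<dots> = (\<Sum>j<N. cnj (F k $$ (j,i)) * (\<Sum>p<M*N. cnj (LINT \<omega>|P. Gmat M N V H k k \<omega> $$ (p,j)) * v $ p))"
    by (intro sum.cong refl arg_cong2[where f = "(*)"]) (auto simp: gij)
  also have "\<dots> = (LINT \<omega>|P. (\<Sum>j<N. cnj (F k $$ (j,i)) * (\<Sum>p<M*N. cnj (Gmat M N V H k k \<omega> $$ (p,j)) * v $ p)))"
  proof -
    have ii: "\<And>j p. j < N \<Longrightarrow> p < M*N \<Longrightarrow> integrable P (\<lambda>\<omega>. cnj (Gmat M N V H k k \<omega> $$ (p,j)) * v $ p)"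
      using G_int[OF _ _ k] by auto
    have "(LINT \<omega>|P. (\<Sum>j<N. cnj (F k $$ (j,i)) * (\<Sum>p<M*N. cnj (Gmat M N V H k k \<omega> $$ (p,j)) * v $ p)))
      = (\<Sum>j<N. LINT \<omega>|P. cnj (F k $$ (j,i)) * (\<Sum>p<M*N. cnj (Gmat M N V H k k \<omega> $$ (p,j)) * v $ p))"
      by (rule Bochner_Integration.integral_sum) (use ii in \<open>auto intro!: Bochner_Integration.integrable_sum\<close>)
    also have "\<dots> = (\<Sum>j<N. cnj (F k $$ (j,i)) * (\<Sum>p<M*N. LINT \<omega>|P. cnj (Gmat M N V H k k \<omega> $$ (p,j)) * v $ p))"
      by (intro sum.cong refl) (use ii in \<open>auto intro!: Bochner_Integration.integral_sum\<close>)
    also have "\<dots> = (\<Sum>j<N. cnj (F k $$ (j,i)) * (\<Sum>p<M*N. cnj (LINT \<omega>|P. Gmat M N V H k k \<omega> $$ (p,j)) * v $ p))"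
      by simp
    finally show ?thesis by simp
  qed
  also have "\<dots> = (LINT \<omega>|P. (Tm k \<omega> *\<^sub>v v) $ i)"
    unfolding Tm_def Tv_entry[OF G_carrier v i] ..
  finally show ?thesis .
qed

lemma Ek_ge: assumes v: "v \<in> carrier_vec (M*N)"
  shows "qf (EG P M N V H k * F k * mat_adjoint (EG P M N V H k * F k)) v \<le> qf (EGFG P M N V H F k k) v"
proof -
  let ?b = "EG P M N V H k * F k"
  let ?y = "\<lambda>\<omega> i. (Tm k \<omega> *\<^sub>v v) $ i"
  have g: "EG P M N V H k \<in> carrier_mat (M*N) N" unfolding EG_def mexp_def by simp
  have b: "?b \<in> carrier_mat (M*N) N" using g F_dim[OF k] by simp
  have bH: "mat_adjoint ?b \<in> carrier_mat N (M*N)" by (rule adj_carrier'[OF b])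
  have bHv_c: "mat_adjoint ?b *\<^sub>v v \<in> carrier_vec N" using bH v by simp
  have "?b * mat_adjoint ?b = mat_adjoint (mat_adjoint ?b) * 1\<^sub>m N * mat_adjoint ?b"
    by (simp add: right_mult_one_mat[OF b])
  then have "qf (?b * mat_adjoint ?b) v = qf (1\<^sub>m N) (mat_adjoint ?b *\<^sub>v v)"
    using qf_congr[OF one_carrier_mat bH v] by simp
  also have "\<dots> = complex_of_real (\<Sum>i<N. (cmod ((mat_adjoint ?b *\<^sub>v v) $ i))^2)"
    using qf_one[OF bHv_c] sq_vec[OF bHv_c] by simp
  also have "\<dots> = complex_of_real (\<Sum>i<N. (cmod (LINT \<omega>|P. ?y \<omega> i))^2)"
    using bHv[OF v] by simp
  finally have L: "qf (?b * mat_adjoint ?b) v = complex_of_real (\<Sum>i<N. (cmod (LINT \<omega>|P. ?y \<omega> i))^2)" .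
  have Tv_c: "\<And>\<omega>. Tm k \<omega> *\<^sub>v v \<in> carrier_vec N" using Tm_carrier[OF k] v by (meson mult_mat_vec_carrier)
  have sq: "\<And>\<omega>. (Tm k \<omega> *\<^sub>v v) \<bullet>c (Tm k \<omega> *\<^sub>v v) = complex_of_real (\<Sum>i<N. (cmod (?y \<omega> i))^2)"
    using sq_vec[OF Tv_c] by simp
  have isum: "integrable P (\<lambda>\<omega>. \<Sum>i<N. (cmod (?y \<omega> i))^2)"
  proof -
    have "integrable P (\<lambda>\<omega>. complex_of_real (\<Sum>i<N. (cmod (?y \<omega> i))^2))"
      using E_qf(2)[OF k v] unfolding sq .
    then show ?thesis by (simp only: complex_of_real_integrable_eq)
  qed
  have ii: "integrable P (\<lambda>\<omega>. (cmod (?y \<omega> i))^2)" if i: "i < N" for i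
  proof (rule Bochner_Integration.integrable_bound[OF isum])
    have "integrable P (\<lambda>\<omega>. ?y \<omega> i)" by (rule y_int[OF v i])
    then have "(\<lambda>\<omega>. ?y \<omega> i) \<in> borel_measurable P" by auto
    then show "(\<lambda>\<omega>. (cmod (?y \<omega> i))\<^sup>2) \<in> borel_measurable P" by measurable
    show "AE \<omega> in P. norm ((cmod (?y \<omega> i))\<^sup>2) \<le> norm (\<Sum>i<N. (cmod (?y \<omega> i))\<^sup>2)"
    proof (rule AE_I2)
      fix \<omega>
      have "(cmod (?y \<omega> i))\<^sup>2 \<le> (\<Sum>i<N. (cmod (?y \<omega> i))\<^sup>2)"
        by (rule member_le_sum) (use i in auto)
      moreover have "0 \<le> (\<Sum>i<N. (cmod (?y \<omega> i))\<^sup>2)" by (intro sum_nonneg) auto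
      ultimately show "norm ((cmod (?y \<omega> i))\<^sup>2) \<le> norm (\<Sum>i<N. (cmod (?y \<omega> i))\<^sup>2)" by simp
    qed
  qed
  have "qf (EGFG P M N V H F k k) v = (LINT \<omega>|P. complex_of_real (\<Sum>i<N. (cmod (?y \<omega> i))^2))"
    unfolding E_qf(1)[OF k v] sq ..
  also have "\<dots> = complex_of_real (LINT \<omega>|P. (\<Sum>i<N. (cmod (?y \<omega> i))^2))"
    by (rule integral_complex_of_real)
  also have "(LINT \<omega>|P. (\<Sum>i<N. (cmod (?y \<omega> i))^2)) = (\<Sum>i<N. LINT \<omega>|P. (cmod (?y \<omega> i))^2)"
    by (rule Bochner_Integration.integral_sum) (use ii in auto)
  finally have R: "qf (EGFG P M N V H F k k) v = complex_of_real (\<Sum>i<N. LINT \<omega>|P. (cmod (?y \<omega> i))^2)" .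
  have "(\<Sum>i<N. (cmod (LINT \<omega>|P. ?y \<omega> i))^2) \<le> (\<Sum>i<N. LINT \<omega>|P. (cmod (?y \<omega> i))^2)"
    by (intro sum_mono sq_int_le[OF P y_int[OF v] ii]) auto
  then show ?thesis unfolding L R by (simp add: less_eq_complex_def)
qed

end

lemma dist3: fixes Lm Rm P1 P2 P3 :: "complex mat"
  assumes Lm: "Lm \<in> carrier_mat N n" and Rm: "Rm \<in> carrier_mat n N"
    and P1: "P1 \<in> carrier_mat n n" and P2: "P2 \<in> carrier_mat n n" and P3: "P3 \<in> carrier_mat n n"
  shows "Lm * (P1 - P2 + c \<cdot>\<^sub>m P3) * Rm = Lm * P1 * Rm - Lm * P2 * Rm + c \<cdot>\<^sub>m (Lm * P3 * Rm)"
proof -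
  have "(P1 - P2 + c \<cdot>\<^sub>m P3) * Rm = (P1 - P2) * Rm + (c \<cdot>\<^sub>m P3) * Rm"
    by (rule add_mult_distrib_mat) (use P1 P2 P3 Rm in auto)
  also have "(P1 - P2) * Rm = P1 * Rm - P2 * Rm" by (rule minus_mult_distrib_mat[OF P1 P2 Rm])
  also have "(c \<cdot>\<^sub>m P3) * Rm = c \<cdot>\<^sub>m (P3 * Rm)" by (rule mult_smult_assoc_mat[OF P3 Rm])
  finally have e1: "(P1 - P2 + c \<cdot>\<^sub>m P3) * Rm = P1 * Rm - P2 * Rm + c \<cdot>\<^sub>m (P3 * Rm)" .
  have c1: "P1 * Rm \<in> carrier_mat n N" "P2 * Rm \<in> carrier_mat n N" "P3 * Rm \<in> carrier_mat n N"
    using P1 P2 P3 Rm by auto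
  have "Lm * (P1 - P2 + c \<cdot>\<^sub>m P3) * Rm = Lm * ((P1 - P2 + c \<cdot>\<^sub>m P3) * Rm)"
    by (rule assoc_mult_mat[OF Lm _ Rm]) (use P1 P2 P3 in auto)
  also have "\<dots> = Lm * (P1 * Rm - P2 * Rm) + Lm * (c \<cdot>\<^sub>m (P3 * Rm))"
    unfolding e1 by (rule mult_add_distrib_mat[OF Lm, where nc = N]) (use c1 in auto)
  also have "Lm * (P1 * Rm - P2 * Rm) = Lm * (P1 * Rm) - Lm * (P2 * Rm)"
    by (rule mult_minus_distrib_mat[OF Lm c1(1,2)])
  also have "Lm * (c \<cdot>\<^sub>m (P3 * Rm)) = c \<cdot>\<^sub>m (Lm * (P3 * Rm))" by (rule mult_smult_distrib[OF Lm c1(3)])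
  also have "Lm * (P1 * Rm) = Lm * P1 * Rm" by (rule assoc_mult_mat[symmetric, OF Lm P1 Rm])
  also have "Lm * (P2 * Rm) = Lm * P2 * Rm" by (rule assoc_mult_mat[symmetric, OF Lm P2 Rm])
  also have "Lm * (P3 * Rm) = Lm * P3 * Rm" by (rule assoc_mult_mat[symmetric, OF Lm P3 Rm])
  finally show ?thesis .
qed

theorem corollary2:
  fixes P :: "'w measure"
    and M L K N k \<tau>p \<tau>c :: nat
    and H V :: "nat \<Rightarrow> nat \<Rightarrow> 'w \<Rightarrow> complex mat"
    and F :: "nat \<Rightarrow> complex mat"
    and \<sigma>2 :: real
  defines "B \<equiv> msum (M*N) (M*N) (\<lambda>l. EGFG P M N V H F k l) {0..<K}
                + complex_of_real \<sigma>2 \<cdot>\<^sub>m Smat P M N V k"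
  defines "Aopt \<equiv> minv B * EG P M N V H k * F k"
  defines "C \<equiv> msum (M*N) (M*N) (\<lambda>l. EGFG P M N V H F k l) {0..<K}
                - EG P M N V H k * Fbar F k * mat_adjoint (EG P M N V H k)
                + complex_of_real \<sigma>2 \<cdot>\<^sub>m Smat P M N V k"
  assumes P: "prob_space P"
    and pos: "0 < M" "0 < L" "0 < N"
    and k: "k < K"
    and H_dim: "\<And>m l \<omega>. m < M \<Longrightarrow> l < K \<Longrightarrow> H m l \<omega> \<in> carrier_mat L N"
    and V_dim: "\<And>m l \<omega>. m < M \<Longrightarrow> l < K \<Longrightarrow> V m l \<omega> \<in> carrier_mat L N"
    and H_meas: "\<And>m l i j. m < M \<Longrightarrow> l < K \<Longrightarrow> i < L \<Longrightarrow> j < N \<Longrightarrow>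
                   (\<lambda>\<omega>. H m l \<omega> $$ (i,j)) \<in> borel_measurable P"
    and V_meas: "\<And>m l i j. m < M \<Longrightarrow> l < K \<Longrightarrow> i < L \<Longrightarrow> j < N \<Longrightarrow>
                   (\<lambda>\<omega>. V m l \<omega> $$ (i,j)) \<in> borel_measurable P"
    and H_L2: "\<And>m l i j. m < M \<Longrightarrow> l < K \<Longrightarrow> i < L \<Longrightarrow> j < N \<Longrightarrow>
                   integrable P (\<lambda>\<omega>. (cmod (H m l \<omega> $$ (i,j)))^2)"
    and V_L2: "\<And>m l i j. m < M \<Longrightarrow> l < K \<Longrightarrow> i < L \<Longrightarrow> j < N \<Longrightarrow>
                   integrable P (\<lambda>\<omega>. (cmod (V m l \<omega> $$ (i,j)))^2)"
    and GFG_int: "\<And>l i j. l < K \<Longrightarrow> i < M*N \<Longrightarrow> j < M*N \<Longrightarrow>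
                   integrable P (\<lambda>\<omega>. (Gmat M N V H k l \<omega> * Fbar F l
                                       * mat_adjoint (Gmat M N V H k l \<omega>)) $$ (i,j))"
    and F_dim: "\<And>l. l < K \<Longrightarrow> F l \<in> carrier_mat N N"
    and \<sigma>2: "0 < \<sigma>2"
    and \<tau>: "0 < \<tau>p" "\<tau>p < \<tau>c"
    and B_inv: "invertible_mat B"
    and C_inv: "invertible_mat C"
    and Aopt_adm: "invertible_mat (Sigma P M N K V H F \<sigma>2 k Aopt)"
  shows "(\<forall>A \<in> carrier_mat (M*N) N. invertible_mat (Sigma P M N K V H F \<sigma>2 k A) \<longrightarrow>
            SE P M N K V H F \<sigma>2 \<tau>p \<tau>c k A \<le> SE P M N K V H F \<sigma>2 \<tau>p \<tau>c k Aopt)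
       \<and> SE P M N K V H F \<sigma>2 \<tau>p \<tau>c k Aopt =
           (1 - real \<tau>p / real \<tau>c) *
           log 2 (Re (det (1\<^sub>m N + mat_adjoint (F k) * mat_adjoint (EG P M N V H k)
                                * minv C * EG P M N V H k * F k)))"
proof -
  note ctx = P k H_dim V_dim H_meas V_meas H_L2 V_L2 F_dim GFG_int
  define n where "n = M * N"
  define g where "g = EG P M N V H k"
  define b where "b = g * F k"
  define Es where "Es = msum (M*N) (M*N) (\<lambda>l. EGFG P M N V H F k l) {0..<K}"
  define S where "S = Smat P M N V k"
  define X where "X = g * Fbar F k * mat_adjoint g"
  have Fk: "F k \<in> carrier_mat N N" by (rule F_dim[OF k])
  have FkH: "mat_adjoint (F k) \<in> carrier_mat N N" by (rule adj_carrier'[OF Fk])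
  have g: "g \<in> carrier_mat (M*N) N" unfolding g_def EG_def mexp_def by simp
  have gH: "mat_adjoint g \<in> carrier_mat N (M*N)" by (rule adj_carrier'[OF g])
  have b: "b \<in> carrier_mat (M*N) N" unfolding b_def using g Fk by simp
  have bH: "mat_adjoint b \<in> carrier_mat N (M*N)" by (rule adj_carrier'[OF b])
  have Es: "Es \<in> carrier_mat (M*N) (M*N)" unfolding Es_def by simp
  have S: "S \<in> carrier_mat (M*N) (M*N)" unfolding S_def by (rule S_carrier[OF ctx])
  have bHe: "mat_adjoint b = mat_adjoint (F k) * mat_adjoint g" unfolding b_def by (rule adj_mult[OF g Fk])
  have X_eq: "X = b * mat_adjoint b"
    unfolding X_def bHe unfolding b_def Fbar_def using g Fk FkH gH by (simp add: massoc carrier_matD)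
  have X: "X \<in> carrier_mat (M*N) (M*N)" unfolding X_eq using b bH by simp
  have C_eq: "C = Es - X + complex_of_real \<sigma>2 \<cdot>\<^sub>m S" unfolding C_def Es_def X_def g_def S_def ..
  have B_eq: "B = Es + complex_of_real \<sigma>2 \<cdot>\<^sub>m S" unfolding B_def Es_def S_def ..
  have C: "C \<in> carrier_mat (M*N) (M*N)" unfolding C_eq using Es X S by simp
  have BC: "B = C + b * mat_adjoint b"
    unfolding B_eq C_eq X_eq[symmetric] using Es X S by (intro eq_matI) auto
  have hEs: "herm Es" unfolding Es_def
    by (rule msum_herm) (auto intro: E_carrier[OF ctx] E_herm[OF ctx])
  have hX: "herm X" unfolding X_eq herm_def using adj_mult[OF b bH] by simp
  have hS: "herm S" unfolding S_def by (rule S_herm[OF ctx])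
  have hC: "herm C" unfolding herm_def C_eq
  proof -
    have "mat_adjoint (Es - X + complex_of_real \<sigma>2 \<cdot>\<^sub>m S) = mat_adjoint (Es - X) + mat_adjoint (complex_of_real \<sigma>2 \<cdot>\<^sub>m S)"
      by (rule adj_add) (use Es X S in auto)
    also have "mat_adjoint (Es - X) = mat_adjoint Es - mat_adjoint X" by (rule adj_minus[OF Es X])
    also have "mat_adjoint (complex_of_real \<sigma>2 \<cdot>\<^sub>m S) = complex_of_real \<sigma>2 \<cdot>\<^sub>m mat_adjoint S"
      by (simp add: adj_smult)
    finally show "mat_adjoint (Es - X + complex_of_real \<sigma>2 \<cdot>\<^sub>m S) = Es - X + complex_of_real \<sigma>2 \<cdot>\<^sub>m S"
      using hEs hX hS unfolding herm_def by simp
  qed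
  have pC: "psd C" unfolding psd_def
  proof
    fix v :: "complex vec" assume "v \<in> carrier_vec (dim_row C)"
    then have v: "v \<in> carrier_vec (M*N)" using C by simp
    have "qf C v = qf (Es - X) v + qf (complex_of_real \<sigma>2 \<cdot>\<^sub>m S) v"
      unfolding C_eq by (rule qf_add) (use Es X S v in auto)
    also have "qf (Es - X) v = qf Es v - qf X v" by (rule qf_minus[OF Es X v])
    also have "qf (complex_of_real \<sigma>2 \<cdot>\<^sub>m S) v = complex_of_real \<sigma>2 * qf S v" by (rule qf_smult[OF S v])
    finally have q: "qf C v = qf Es v - qf X v + complex_of_real \<sigma>2 * qf S v" .
    have "qf Es v = (\<Sum>l\<in>{0..<K}. qf (EGFG P M N V H F k l) v)"
      unfolding Es_def by (rule msum_qf) (auto intro: E_carrier[OF ctx] v)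
    also have "\<dots> \<ge> qf (EGFG P M N V H F k k) v"
      by (rule member_le_sum) (use k E_psd[OF ctx _ v] in auto)
    finally have e1: "qf (EGFG P M N V H F k k) v \<le> qf Es v" .
    have e2: "qf X v \<le> qf (EGFG P M N V H F k k) v"
      using Ek_ge[OF ctx v] unfolding X_eq b_def g_def .
    have e3: "0 \<le> qf S v" unfolding S_def by (rule S_psd[OF ctx v])
    have e4: "0 \<le> complex_of_real \<sigma>2 * qf S v"
      by (rule mult_nonneg_nonneg[OF _ e3]) (use \<sigma>2 in \<open>simp add: less_eq_complex_def\<close>)
    have "0 \<le> qf Es v - qf X v" using e1 e2 by simp
    then show "0 \<le> qf C v" unfolding q using e4 by simp
  qed
  have Dm: "Dmat P M N V H F k A = mat_adjoint A * b" if A: "A \<in> carrier_mat (M*N) N" for A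
    unfolding Dmat_def b_def g_def[symmetric]
    by (rule assoc_mult_mat[OF adj_carrier'[OF A] g Fk])
  have Sig: "Sigma P M N K V H F \<sigma>2 k A = mat_adjoint A * C * A" if A: "A \<in> carrier_mat (M*N) N" for A
  proof -
    have AH: "mat_adjoint A \<in> carrier_mat N (M*N)" by (rule adj_carrier'[OF A])
    have "msum N N (\<lambda>l. mat_adjoint A * EGFG P M N V H F k l * A) {0..<K} = mat_adjoint A * Es * A"
      unfolding Es_def by (rule msum_mult[OF _ _ AH A]) (auto intro: E_carrier[OF ctx])
    moreover have "Dmat P M N V H F k A * mat_adjoint (Dmat P M N V H F k A) = mat_adjoint A * X * A"
      unfolding Dm[OF A] X_eq adj_mult[OF AH b]
      using AH A b bH by (simp add: massoc carrier_matD)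
    moreover have "mat_adjoint A * C * A = mat_adjoint A * Es * A - mat_adjoint A * X * A + complex_of_real \<sigma>2 \<cdot>\<^sub>m (mat_adjoint A * S * A)"
      unfolding C_eq by (rule dist3[OF AH A Es X S])
    ultimately show ?thesis unfolding Sigma_def S_def by simp
  qed
  have SE_eq: "SE P M N K V H F \<sigma>2 \<tau>p \<tau>c k A = (1 - real \<tau>p / real \<tau>c) *
     log 2 (Re (det (1\<^sub>m N + mat_adjoint (mat_adjoint A * b) * minv (mat_adjoint A * C * A) * (mat_adjoint A * b))))"
    if A: "A \<in> carrier_mat (M*N) N" for A
    unfolding SE_def Dm[OF A] Sig[OF A] ..
  have B: "B \<in> carrier_mat (M*N) (M*N)" unfolding B_eq using Es S by simp
  have Bi: "minv B \<in> carrier_mat (M*N) (M*N)" by (rule minv(1)[OF B B_inv])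
  have Ao_eq: "Aopt = minv (C + b * mat_adjoint b) * b"
  proof -
    have "Aopt = minv B * (g * F k)" unfolding Aopt_def g_def[symmetric] by (rule assoc_mult_mat[OF Bi g Fk])
    then show ?thesis using BC b_def by simp
  qed
  have Ao: "Aopt \<in> carrier_mat (M*N) N" unfolding Ao_eq BC[symmetric] using Bi b by simp
  have iS: "invertible_mat (mat_adjoint (minv (C + b * mat_adjoint b) * b) * C * (minv (C + b * mat_adjoint b) * b))"
    using Aopt_adm unfolding Sig[OF Ao] unfolding Ao_eq .
  have opt: "mat_adjoint (mat_adjoint Aopt * b) * minv (mat_adjoint Aopt * C * Aopt) * (mat_adjoint Aopt * b)
      = mat_adjoint b * minv C * b"
    unfolding Ao_eq by (rule core2[OF b C hC C_inv _ iS]) (use B_inv BC in simp)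
  have SEopt: "SE P M N K V H F \<sigma>2 \<tau>p \<tau>c k Aopt = (1 - real \<tau>p / real \<tau>c) *
     log 2 (Re (det (1\<^sub>m N + mat_adjoint b * minv C * b)))"
    unfolding SE_eq[OF Ao] opt ..
  have Ci: "minv C \<in> carrier_mat (M*N) (M*N)" by (rule minv(1)[OF C C_inv])
  have rhs: "mat_adjoint (F k) * mat_adjoint (EG P M N V H k) * minv C * EG P M N V H k * F k = mat_adjoint b * minv C * b"
    unfolding g_def[symmetric] bHe using FkH gH Ci g Fk by (simp add: massoc carrier_matD b_def)
  have cpos: "0 \<le> 1 - real \<tau>p / real \<tau>c" using \<tau> by simp
  show ?thesis
  proof
    show "\<forall>A\<in>carrier_mat (M * N) N. invertible_mat (Sigma P M N K V H F \<sigma>2 k A) \<longrightarrow>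
        SE P M N K V H F \<sigma>2 \<tau>p \<tau>c k A \<le> SE P M N K V H F \<sigma>2 \<tau>p \<tau>c k Aopt"
    proof (intro ballI impI)
      fix A assume A: "A \<in> carrier_mat (M * N) N" and iA: "invertible_mat (Sigma P M N K V H F \<sigma>2 k A)"
      have iA': "invertible_mat (mat_adjoint A * C * A)" using iA unfolding Sig[OF A] .
      note c1 = core1[OF b C hC pC C_inv A iA']
      let ?dA = "det (1\<^sub>m N + mat_adjoint (mat_adjoint A * b) * minv (mat_adjoint A * C * A) * (mat_adjoint A * b))"
      let ?dO = "det (1\<^sub>m N + mat_adjoint b * minv C * b)"
      have r1: "1 \<le> Re ?dA" using c1(1) by (simp add: less_eq_complex_def)
      have r2: "Re ?dA \<le> Re ?dO" using c1(2) by (simp add: less_eq_complex_def)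
      have "log 2 (Re ?dA) \<le> log 2 (Re ?dO)" using r1 r2 by simp
      then show "SE P M N K V H F \<sigma>2 \<tau>p \<tau>c k A \<le> SE P M N K V H F \<sigma>2 \<tau>p \<tau>c k Aopt"
        unfolding SE_eq[OF A] SEopt using cpos by (intro mult_left_mono)
    qed
    show "SE P M N K V H F \<sigma>2 \<tau>p \<tau>c k Aopt = (1 - real \<tau>p / real \<tau>c) *
           log 2 (Re (det (1\<^sub>m N + mat_adjoint (F k) * mat_adjoint (EG P M N V H k)
                                * minv C * EG P M N V H k * F k)))"
      unfolding SEopt rhs ..
  qed
qed

end
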